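(* Every object $(V,\mathsf b,\mathsf t)$ of $\mathcal E_0$ (equivalently, every fiber functor on $\mathbf{CrysTL}$) is isomorphic to an inflation $(V',\mathsf b',\mathsf t')\triangleright(\Bbbk^{\oplus 2m},\mathsf J_2^{\perp m},\mathsf t'')$ with $m>0$, where $(\Bbbk^{\oplus 2m},\mathsf J_2^{\perp m},\mathsf t'')\in\mathcal E_0$ (so $\mathsf t''\in\mathcal R(\mathsf J_2^{\perp m})\otimes\mathcal L(\mathsf J_2^{\perp m})$) and $(V',\mathsf b',\mathsf t')$ is a triple with $\mathsf t'\in\mathcal R(\mathsf b')\otimes\mathcal L(\mathsf b')$ and $\mathsf b'(\mathsf t')=0$.
   Context: $\Bbbk=\mathbb C$. For a bilinear form $\mathsf b$ on a finite-dimensional space $V$, $\mathcal L(\mathsf b)=\{v:\mathsf b(v,-)=0\}$ and $\mathcal R(\mathsf b)=\{v:\mathsf b(-,v)=0\}$, and $\mathsf b(\mathsf t)$ denotes $\mathsf b$ applied to $\mathsf t\in V\otimes V$ as a linear map $V\otimes V\to\Bbbk$. $\mathcal E_0$ is the category whose objects are triples $(V,\mathsf b,\mathsf t)$ with $V$ finite-dimensional, $\mathsf b$ bilinear on $V$, $\mathsf t\in\mathcal R(\mathsf b)\otimes\mathcal L(\mathsf b)$ and $\mathsf b(\mathsf t)=1$; morphisms $(V,\mathsf b,\mathsf t)\to(W,\mathsf c,\mathsf s)$ are linear maps $f$ with $\mathsf c(fv,fw)=\mathsf b(v,w)$ and $(f\otimes f)(\mathsf t)=\mathsf s$. (It is equivalent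 to the category of fiber functors — faithful exact $\Bbbk$-linear monoidal functors to $\mathbf{vec}$ — on the Cauchy completion $\mathbf{CrysTL}$ of the category $\mathcal{TL}_0(\Bbbk)$ generated by $\mathrm{cup}:\mathbf 0\to\mathbf 2$, $\mathrm{cap}:\mathbf 2\to\mathbf 0$ with both zig-zags $0$ and $\mathrm{cap}\circ\mathrm{cup}=\mathrm{id}_{\mathbf 0}$, via $U\mapsto(U(\mathbf 1),U(\mathrm{cap}),U(\mathrm{cup}))$.) Given $(V,\mathsf b,\mathsf t)\in\mathcal E_0$ and a triple $(V',\mathsf b',\mathsf t')$ with $\mathsf t'\in\mathcal R(\mathsf b')\otimes\mathcal L(\mathsf b')$ and $\mathsf b'(\mathsf t')=0$, the inflation is $(V',\mathsf b',\mathsf t')\triangleright(V,\mathsf b,\mathsf t)=(V'\oplus V,\mathsf b'\perp\mathsf b,\mathsf t+\mathsf t')\in\mathcal E_0$, where $\perp$ denotes orthogonal direct sum of forms. $\mathsf J_2$ is the bilinear form on $\Bbbk^2$ with matrix $\begin{pmatrix}0&1\\0&0\end{pmatrix}$, i.e. $\mathsf J_2(x,y)=x_1y_2$, and $\mathsf J_2^{\perp m}$ is the orthogonal sum of $m$ copies on $\Bbbk^{\oplus 2m}$. *)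

theory Defs
  imports Complex_Main "Jordan_Normal_Form.Matrix"
begin

text \<open>Coordinates: a finite-dimensional space V is C^n, vectors are complex vec of
dimension n. A bilinear form b is given by its Gram matrix B (B(i,j) = b(e_i,e_j)),
so b(v,w) = v^T B w. A tensor t in V (x) V is given by its coefficient matrix T,
t = sum_{i,j} T(i,j) e_i (x) e_j.\<close>

definition bil :: "complex mat \<Rightarrow> complex vec \<Rightarrow> complex vec \<Rightarrow> complex" where
  "bil B v w = scalar_prod v (B *\<^sub>v w)"

definition Lrad :: "nat \<Rightarrow> complex mat \<Rightarrow> complex vec set" where
  "Lrad n B = {v \<in> carrier_vec n. \<forall>w \<in> carrier_vec n. bil B v w = 0}"

definition Rrad :: "nat \<Rightarrow> complex mat \<Rightarrow> complex vec set" where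
  "Rrad n B = {v \<in> carrier_vec n. \<forall>w \<in> carrier_vec n. bil B w v = 0}"

definition tensor_in :: "nat \<Rightarrow> complex mat \<Rightarrow> complex vec set \<Rightarrow> complex vec set \<Rightarrow> bool" where
  "tensor_in n T U W \<longleftrightarrow> (\<exists>(k::nat) us ws. (\<forall>i<k. us i \<in> U \<and> ws i \<in> W) \<and>
      T = mat n n (\<lambda>(a, c). \<Sum>i<k. (us i $ a) * (ws i $ c)))"

definition eval_tensor :: "nat \<Rightarrow> complex mat \<Rightarrow> complex mat \<Rightarrow> complex" where
  "eval_tensor n B T = (\<Sum>i<n. \<Sum>j<n. B $$ (i,j) * T $$ (i,j))"

definition E0_obj :: "nat \<Rightarrow> complex mat \<Rightarrow> complex mat \<Rightarrow> bool" where
  "E0_obj n B T \<longleftrightarrow> B \<in> carrier_mat n n \<and> tensor_in n T (Rrad n B) (Lrad n B)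
      \<and> eval_tensor n B T = 1"

definition infl_triple :: "nat \<Rightarrow> complex mat \<Rightarrow> complex mat \<Rightarrow> bool" where
  "infl_triple n B T \<longleftrightarrow> B \<in> carrier_mat n n \<and> tensor_in n T (Rrad n B) (Lrad n B)
      \<and> eval_tensor n B T = 0"

text \<open>Morphisms (V,b,t) -> (W,c,s): linear f (matrix F) with c(fv,fw) = b(v,w)
and (f (x) f)(t) = s, i.e. F T F^T = S.\<close>
definition E0_mor :: "nat \<Rightarrow> complex mat \<Rightarrow> complex mat \<Rightarrow> nat \<Rightarrow> complex mat \<Rightarrow> complex mat
    \<Rightarrow> complex mat \<Rightarrow> bool" where
  "E0_mor n B T m C S F \<longleftrightarrow> F \<in> carrier_mat m n
     \<and> (\<forall>v \<in> carrier_vec n. \<forall>w \<in> carrier_vec n. bil C (F *\<^sub>v v) (F *\<^sub>v w) = bil B v w)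
     \<and> F * T * transpose_mat F = S"

definition E0_iso :: "nat \<Rightarrow> complex mat \<Rightarrow> complex mat \<Rightarrow> nat \<Rightarrow> complex mat \<Rightarrow> complex mat \<Rightarrow> bool" where
  "E0_iso n B T m C S \<longleftrightarrow> (\<exists>F G. E0_mor n B T m C S F \<and> E0_mor m C S n B T G
      \<and> G * F = 1\<^sub>m n \<and> F * G = 1\<^sub>m m)"

text \<open>Inflation (V',b',t') |> (V,b,t) = (V' + V, b' perp b, t + t'), on C^(n'+n)
with the V' coordinates first.\<close>
definition infl_form :: "nat \<Rightarrow> complex mat \<Rightarrow> nat \<Rightarrow> complex mat \<Rightarrow> complex mat" where
  "infl_form n' B' n B = four_block_mat B' (0\<^sub>m n' n) (0\<^sub>m n n') B"

definition infl_tensor :: "nat \<Rightarrow> complex mat \<Rightarrow> nat \<Rightarrow> complex mat \<Rightarrow> complex mat" where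
  "infl_tensor n' T' n T = four_block_mat T' (0\<^sub>m n' n) (0\<^sub>m n n') T"

text \<open>J_2^{perp m} on C^(2m): J_2(x,y) = x_1 y_2 on each consecutive pair of coordinates.\<close>
definition J2perp :: "nat \<Rightarrow> complex mat" where
  "J2perp m = mat (2*m) (2*m) (\<lambda>(i,j). if even i \<and> j = i + 1 then 1 else 0)"

end

theory Submission
  imports Defs "Jordan_Normal_Form.Jordan_Normal_Form_Existence"
begin


lemma mA: "dim_col A = dim_row B \<Longrightarrow> dim_col B = dim_row C \<Longrightarrow> A * B * C = A * (B * C)"
  by (rule assoc_mult_mat[of A "dim_row A" "dim_col A" B "dim_col B" C "dim_col C"]) auto

lemma dL: "dim_col (A::'a::semiring_0 mat) = dim_row B \<Longrightarrow> dim_row B = dim_row C \<Longrightarrow> dim_col B = dim_col C \<Longrightarrow>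
   A * (B + C) = A * B + A * C"
  by (rule mult_add_distrib_mat[of A "dim_row A" "dim_col A" B "dim_col B" C]) auto

lemma dR: "dim_row (A::'a::semiring_0 mat) = dim_row B \<Longrightarrow> dim_col A = dim_col B \<Longrightarrow> dim_col A = dim_row C \<Longrightarrow>
   (A + B) * C = A * C + B * C"
  by (rule add_mult_distrib_mat[of A "dim_row A" "dim_col A" B C "dim_col C"]) auto

lemma dLm: "dim_col (A::'a::ring mat) = dim_row B \<Longrightarrow> dim_row B = dim_row C \<Longrightarrow> dim_col B = dim_col C \<Longrightarrow>
   A * (B - C) = A * B - A * C"
  by (rule mult_minus_distrib_mat[of A "dim_row A" "dim_col A" B "dim_col B" C]) auto

lemma dRm: "dim_row (A::'a::ring mat) = dim_row B \<Longrightarrow> dim_col A = dim_col B \<Longrightarrow> dim_col A = dim_row C \<Longrightarrow>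
   (A - B) * C = A * C - B * C"
  by (rule minus_mult_distrib_mat[of A "dim_row A" "dim_col A" B C "dim_col C"]) auto

lemma tM: "dim_col (A::'a::comm_semiring_0 mat) = dim_row B \<Longrightarrow> transpose_mat (A * B) = transpose_mat B * transpose_mat A"
  by (rule transpose_mult[of A "dim_row A" "dim_col A" B "dim_col B"]) auto

lemma tA: "dim_row (A::'a::monoid_add mat) = dim_row B \<Longrightarrow> dim_col A = dim_col B \<Longrightarrow>
   transpose_mat (A + B) = transpose_mat A + transpose_mat B"
  by (intro eq_matI) auto

lemma tMi: "dim_row (A::'a::group_add mat) = dim_row B \<Longrightarrow> dim_col A = dim_col B \<Longrightarrow>
   transpose_mat (A - B) = transpose_mat A - transpose_mat B"
  by (intro eq_matI) auto

lemma mz[simp]: "dim_row A = nr \<Longrightarrow> dim_col A = nc \<Longrightarrow> A - 0\<^sub>m nr nc = (A::'a::group_add mat)"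
  by (intro eq_matI) auto
lemma pz[simp]: "dim_row A = nr \<Longrightarrow> dim_col A = nc \<Longrightarrow> A + 0\<^sub>m nr nc = (A::'a::monoid_add mat)"
  by (intro eq_matI) auto
lemma zp[simp]: "dim_row A = nr \<Longrightarrow> dim_col A = nc \<Longrightarrow> 0\<^sub>m nr nc + A = (A::'a::monoid_add mat)"
  by (intro eq_matI) auto
lemma zt[simp]: "transpose_mat (0\<^sub>m a b) = 0\<^sub>m b a"
  by (intro eq_matI) auto

lemma mult_entry: "A \<in> carrier_mat a b \<Longrightarrow> B \<in> carrier_mat b c \<Longrightarrow> i < a \<Longrightarrow> j < c \<Longrightarrow>
  (A * B) $$ (i,j) = (\<Sum>k<b. A $$ (i,k) * B $$ (k,j))"
  by (auto simp: scalar_prod_def atLeast0LessThan intro!: sum.cong)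

lemma idem_factor:
  fixes P :: "complex mat"
  assumes P: "P \<in> carrier_mat n n" and PP: "P * P = P"
  shows "\<exists>r Z \<Phi>. Z \<in> carrier_mat n r \<and> \<Phi> \<in> carrier_mat r n \<and> \<Phi> * Z = 1\<^sub>m r \<and> Z * \<Phi> = P"
proof -
  have inv: "j \<le> n \<Longrightarrow> \<exists>r Z \<Phi>. Z \<in> carrier_mat n r \<and> \<Phi> \<in> carrier_mat r n \<and> \<Phi> * Z = 1\<^sub>m r
     \<and> \<Phi> * P = \<Phi> \<and> P * Z = Z \<and> (\<forall>i<j. \<forall>a<n. (Z * \<Phi>) $$ (a,i) = P $$ (a,i))" for j
  proof (induction j)
    case 0
    show ?case
      by (intro exI[of _ 0] exI[of _ "0\<^sub>m n 0"] exI[of _ "0\<^sub>m 0 n"]) (use P in auto)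
  next
    case (Suc j)
    then obtain r Z \<Phi> where Z: "Z \<in> carrier_mat n r" and Ph: "\<Phi> \<in> carrier_mat r n"
      and PhZ: "\<Phi> * Z = 1\<^sub>m r" and PhP: "\<Phi> * P = \<Phi>" and PZ: "P * Z = Z"
      and old: "\<forall>i<j. \<forall>a<n. (Z * \<Phi>) $$ (a,i) = P $$ (a,i)" by auto
    have jn: "j < n" using Suc by auto
    define Y where "Y = P - Z * \<Phi>"
    have Y: "Y \<in> carrier_mat n n" using P Z Ph unfolding Y_def by auto
    have ZPh: "Z * \<Phi> \<in> carrier_mat n n" using Z Ph by auto
    have YZ: "Y * Z = 0\<^sub>m n r"
    proof -
      have "Y * Z = P * Z - Z * \<Phi> * Z" unfolding Y_def using P Z Ph by (simp add: dRm)
      also have "\<dots> = Z - Z" using PZ PhZ Z Ph by (simp add: mA)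
      finally show ?thesis using Z by simp
    qed
    have PhY: "\<Phi> * Y = 0\<^sub>m r n"
    proof -
      have "\<Phi> * Y = \<Phi> * P - \<Phi> * (Z * \<Phi>)" unfolding Y_def using P Z Ph by (simp add: dLm)
      also have "\<dots> = \<Phi> - \<Phi>" using PhP PhZ Z Ph by (simp add: mA[symmetric])
      finally show ?thesis using Ph by simp
    qed
    have YP: "Y * P = Y"
    proof -
      have "Y * P = P * P - Z * \<Phi> * P" unfolding Y_def using P Z Ph by (simp add: dRm)
      also have "\<dots> = Y" using PP PhP Z Ph P unfolding Y_def by (simp add: mA)
      finally show ?thesis .
    qed
    have PY: "P * Y = Y"
    proof -
      have "P * Y = P * P - P * (Z * \<Phi>)" unfolding Y_def using P Z Ph by (simp add: dLm)
      also have "\<dots> = Y" using PP PZ Z Ph P unfolding Y_def by (simp add: mA[symmetric])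
      finally show ?thesis .
    qed
    have YY: "Y * Y = Y"
    proof -
      have "Y * Y = Y * (P - Z * \<Phi>)" by (simp only: Y_def)
      also have "\<dots> = Y * P - Y * (Z * \<Phi>)" using P Z Ph Y by (simp add: dLm)
      also have "Y * (Z * \<Phi>) = 0\<^sub>m n n" using YZ Z Ph Y by (simp add: mA[symmetric])
      finally show ?thesis using YP Y by simp
    qed
    have Yent: "a < n \<Longrightarrow> b < n \<Longrightarrow> Y $$ (a,b) = P $$ (a,b) - (Z * \<Phi>) $$ (a,b)" for a b
      unfolding Y_def using P Z Ph by (simp add: carrier_matD)
    show ?case
    proof (cases "\<forall>a<n. Y $$ (a,j) = 0")
      case True
      have "\<forall>i<Suc j. \<forall>a<n. (Z * \<Phi>) $$ (a,i) = P $$ (a,i)"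
      proof (intro allI impI)
        fix i a assume i: "i < Suc j" and a: "a < n"
        show "(Z * \<Phi>) $$ (a,i) = P $$ (a,i)"
        proof (cases "i < j")
          case True thus ?thesis using old a by auto
        next
          case False
          hence "i = j" using i by auto
          thus ?thesis using True[rule_format, OF a] Yent[OF a jn] by auto
        qed
      qed
      thus ?thesis using Z Ph PhZ PhP PZ by blast
    next
      case False
      then obtain a0 where a0: "a0 < n" and c0: "Y $$ (a0,j) \<noteq> 0" by auto
      define c where "c = Y $$ (a0,j)"
      define Z' where "Z' = mat n (Suc r) (\<lambda>(i,d). if d < r then Z $$ (i,d) else Y $$ (i,j))"
      define Ph' where "Ph' = mat (Suc r) n (\<lambda>(d,i). if d < r then \<Phi> $$ (d,i) else Y $$ (a0,i) / c)"
      have Z': "Z' \<in> carrier_mat n (Suc r)" unfolding Z'_def by auto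
      have Ph': "Ph' \<in> carrier_mat (Suc r) n" unfolding Ph'_def by auto
      have cne: "c \<noteq> 0" using c0 c_def by auto
      have Ylow: "i < j \<Longrightarrow> Y $$ (a0, i) = 0" for i
        using Yent[OF a0, of i] old a0 jn by auto
      have e1: "Ph' * Z' = 1\<^sub>m (Suc r)"
      proof (rule eq_matI)
        fix d e assume d: "d < dim_row (1\<^sub>m (Suc r))" and e: "e < dim_col (1\<^sub>m (Suc r))"
        hence d: "d < Suc r" and e: "e < Suc r" by auto
        have "(Ph' * Z') $$ (d,e) = (\<Sum>i<n. Ph' $$ (d,i) * Z' $$ (i,e))"
          by (rule mult_entry[OF Ph' Z' d e])
        also have "\<dots> = (\<Sum>i<n. (if d < r then \<Phi> $$ (d,i) else Y $$ (a0,i) / c) *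
             (if e < r then Z $$ (i,e) else Y $$ (i,j)))"
          by (rule sum.cong, auto simp: Ph'_def Z'_def d e)
        also have "\<dots> = 1\<^sub>m (Suc r) $$ (d,e)"
        proof (cases "d < r"; cases "e < r")
          assume "d < r" "e < r"
          thus ?thesis using mult_entry[OF Ph Z, of d e] PhZ by simp
        next
          assume "d < r" "\<not> e < r"
          hence ee: "e = r" using e by auto
          have "(\<Phi> * Y) $$ (d,j) = 0" using PhY \<open>d < r\<close> jn by simp
          thus ?thesis using mult_entry[OF Ph Y, of d j] \<open>d < r\<close> ee jn by simp
        next
          assume "\<not> d < r" "e < r"
          hence dd: "d = r" using d by auto
          have "(Y * Z) $$ (a0,e) = 0" using YZ \<open>e < r\<close> a0 by simp
          hence "(\<Sum>i<n. Y $$ (a0,i) * Z $$ (i,e)) = 0" using mult_entry[OF Y Z a0 \<open>e < r\<close>] by simp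
          hence "(\<Sum>i<n. Y $$ (a0,i) * Z $$ (i,e)) / c = 0" by simp
          thus ?thesis using dd \<open>e < r\<close> by (simp add: sum_divide_distrib)
        next
          assume "\<not> d < r" "\<not> e < r"
          hence dd: "d = r" "e = r" using d e by auto
          have "(\<Sum>i<n. Y $$ (a0,i) * Y $$ (i,j)) = c"
            using mult_entry[OF Y Y a0 jn] YY c_def by simp
          hence "(\<Sum>i<n. Y $$ (a0,i) * Y $$ (i,j)) / c = 1" using cne by simp
          thus ?thesis using dd by (simp add: sum_divide_distrib)
        qed
        finally show "(Ph' * Z') $$ (d,e) = 1\<^sub>m (Suc r) $$ (d,e)" .
      qed (use Ph' Z' in auto)
      have e2: "Ph' * P = Ph'"
      proof (rule eq_matI)
        fix d b assume d: "d < dim_row Ph'" and b: "b < dim_col Ph'"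
        hence d: "d < Suc r" and b: "b < n" using Ph' by auto
        have "(Ph' * P) $$ (d,b) = (\<Sum>i<n. Ph' $$ (d,i) * P $$ (i,b))"
          by (rule mult_entry[OF Ph' P d b])
        also have "\<dots> = (\<Sum>i<n. (if d < r then \<Phi> $$ (d,i) else Y $$ (a0,i) / c) * P $$ (i,b))"
          by (rule sum.cong, auto simp: Ph'_def d)
        also have "\<dots> = Ph' $$ (d,b)"
        proof (cases "d < r")
          case True
          thus ?thesis using mult_entry[OF Ph P True b] PhP d b by (simp add: Ph'_def)
        next
          case False
          have "(\<Sum>i<n. Y $$ (a0,i) * P $$ (i,b)) = Y $$ (a0,b)"
            using mult_entry[OF Y P a0 b] YP by simp
          thus ?thesis using False d b by (simp add: Ph'_def sum_divide_distrib[symmetric])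
        qed
        finally show "(Ph' * P) $$ (d,b) = Ph' $$ (d,b)" .
      qed (use Ph' P in auto)
      have e3: "P * Z' = Z'"
      proof (rule eq_matI)
        fix a e assume a: "a < dim_row Z'" and e: "e < dim_col Z'"
        hence a: "a < n" and e: "e < Suc r" using Z' by auto
        have "(P * Z') $$ (a,e) = (\<Sum>i<n. P $$ (a,i) * Z' $$ (i,e))"
          by (rule mult_entry[OF P Z' a e])
        also have "\<dots> = (\<Sum>i<n. P $$ (a,i) * (if e < r then Z $$ (i,e) else Y $$ (i,j)))"
          by (rule sum.cong, auto simp: Z'_def e)
        also have "\<dots> = Z' $$ (a,e)"
        proof (cases "e < r")
          case True
          thus ?thesis using mult_entry[OF P Z a True] PZ a e by (simp add: Z'_def)
        next
          case False
          thus ?thesis using mult_entry[OF P Y a jn] PY a e by (simp add: Z'_def)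
        qed
        finally show "(P * Z') $$ (a,e) = Z' $$ (a,e)" .
      qed (use Z' P in auto)
      have e4: "\<forall>i<Suc j. \<forall>a<n. (Z' * Ph') $$ (a,i) = P $$ (a,i)"
      proof (intro allI impI)
        fix i a assume i: "i < Suc j" and a: "a < n"
        have i': "i < n" using i jn by auto
        have "(Z' * Ph') $$ (a,i) = (\<Sum>d<Suc r. Z' $$ (a,d) * Ph' $$ (d,i))"
          by (rule mult_entry[OF Z' Ph' a i'])
        also have "\<dots> = (\<Sum>d<r. Z $$ (a,d) * \<Phi> $$ (d,i)) + Y $$ (a,j) * (Y $$ (a0,i) / c)"
          by (simp add: Z'_def Ph'_def a i'; rule sum.cong; simp)
        also have "\<dots> = (Z * \<Phi>) $$ (a,i) + Y $$ (a,j) * (Y $$ (a0,i) / c)"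
          using mult_entry[OF Z Ph a i'] by simp
        also have "\<dots> = P $$ (a,i)"
        proof (cases "i < j")
          case True thus ?thesis using old a Ylow by auto
        next
          case False
          hence "i = j" using i by auto
          thus ?thesis using Yent[OF a jn] cne c_def by simp
        qed
        finally show "(Z' * Ph') $$ (a,i) = P $$ (a,i)" .
      qed
      show ?thesis by (intro exI[of _ "Suc r"] exI[of _ Z'] exI[of _ Ph'] conjI Z' Ph' e1 e2 e3 e4)
    qed
  qed
  from inv[of n] obtain r Z \<Phi> where Z: "Z \<in> carrier_mat n r" and Ph: "\<Phi> \<in> carrier_mat r n"
    and PhZ: "\<Phi> * Z = 1\<^sub>m r" and all: "\<forall>i<n. \<forall>a<n. (Z * \<Phi>) $$ (a,i) = P $$ (a,i)" by auto
  have "Z * \<Phi> = P" using all Z Ph P by (intro eq_matI) auto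
  thus ?thesis using Z Ph PhZ by blast
qed



lemma jm_prop: "i < sum_list (map fst n_as) \<Longrightarrow> j < sum_list (map fst n_as) \<Longrightarrow>
  jordan_matrix n_as $$ (i,j) \<noteq> 0 \<Longrightarrow> jordan_matrix n_as $$ (i,i) = jordan_matrix n_as $$ (j,j)"
proof (induction n_as arbitrary: i j)
  case Nil thus ?case by simp
next
  case (Cons na n_as)
  obtain n a where na: "na = (n,a)" by (cases na)
  let ?s = "sum_list (map fst n_as)"
  have i: "i < n + ?s" and j: "j < n + ?s" using Cons.prems na by auto
  note jm = jordan_matrix_Cons[of n a n_as]
  show ?case
  proof (cases "i < n"; cases "j < n")
    assume "i < n" "j < n"
    thus ?thesis using Cons.prems(3) i j unfolding na jm by (auto split: if_splits)
  next
    assume "i < n" "\<not> j < n"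
    thus ?thesis using Cons.prems(3) i j unfolding na jm by auto
  next
    assume "\<not> i < n" "j < n"
    thus ?thesis using Cons.prems(3) i j unfolding na jm by auto
  next
    assume a1: "\<not> i < n" "\<not> j < n"
    have "jordan_matrix n_as $$ (i - n, j - n) \<noteq> 0" using Cons.prems(3) i j a1 unfolding na jm by auto
    from Cons.IH[OF _ _ this] i j a1
    have "jordan_matrix n_as $$ (i - n, i - n) = jordan_matrix n_as $$ (j - n, j - n)" by auto
    thus ?thesis using i j a1 unfolding na jm by auto
  qed
qed

definition dg :: "nat \<Rightarrow> (nat \<Rightarrow> complex) \<Rightarrow> complex mat" where
  "dg k d = mat k k (\<lambda>(i,j). if i = j then d i else 0)"

lemma dg_carrier[simp]: "dg k d \<in> carrier_mat k k" "dim_row (dg k d) = k" "dim_col (dg k d) = k"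
  unfolding dg_def by auto

lemma dg_left: assumes "A \<in> carrier_mat k c" "i < k" "j < c"
  shows "(dg k d * A) $$ (i,j) = d i * A $$ (i,j)"
proof -
  have "(dg k d * A) $$ (i,j) = (\<Sum>l<k. dg k d $$ (i,l) * A $$ (l,j))"
    by (rule mult_entry[OF dg_carrier(1) assms])
  also have "\<dots> = (\<Sum>l<k. if l = i then d i * A $$ (i,j) else 0)"
    by (rule sum.cong) (auto simp: dg_def assms)
  also have "\<dots> = d i * A $$ (i,j)" using assms by simp
  finally show ?thesis .
qed

lemma dg_right: assumes "A \<in> carrier_mat r k" "i < r" "j < k"
  shows "(A * dg k d) $$ (i,j) = A $$ (i,j) * d j"
proof -
  have "(A * dg k d) $$ (i,j) = (\<Sum>l<k. A $$ (i,l) * dg k d $$ (l,j))"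
    by (rule mult_entry[OF assms(1) dg_carrier(1) assms(2,3)])
  also have "\<dots> = (\<Sum>l<k. if l = j then A $$ (i,j) * d j else 0)"
    by (rule sum.cong) (auto simp: dg_def assms)
  also have "\<dots> = A $$ (i,j) * d j" using assms by simp
  finally show ?thesis .
qed

definition mytr :: "complex mat \<Rightarrow> complex" where
  "mytr A = (\<Sum>i<dim_row A. A $$ (i,i))"

lemma fitting:
  fixes J :: "complex mat"
  assumes J: "J \<in> carrier_mat k k" and up: "\<forall>i<k. \<forall>j<i. J $$ (i,j) = 0"
    and jp: "\<forall>i<k. \<forall>j<k. J $$ (i,j) \<noteq> 0 \<longrightarrow> J $$ (i,i) = J $$ (j,j)"
  shows "\<exists>E R Rinv. E \<in> carrier_mat k k \<and> R \<in> carrier_mat k k \<and> Rinv \<in> carrier_mat k k \<and>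
    E * E = E \<and> transpose_mat E = E \<and> E * J = J * E \<and> E * R = E * J \<and> R * E = J * E \<and>
    R * Rinv = 1\<^sub>m k \<and> Rinv * R = 1\<^sub>m k \<and> mytr (transpose_mat J * (1\<^sub>m k - E)) = 0"
proof -
  define e where "e i = (if J $$ (i,i) \<noteq> 0 then 1 else (0::complex))" for i
  define E where "E = dg k e"
  define R where "R = J + dg k (\<lambda>i. 1 - e i)"
  have E: "E \<in> carrier_mat k k" unfolding E_def by simp
  have R: "R \<in> carrier_mat k k" unfolding R_def using J by simp
  have EE: "E * E = E"
  proof (rule eq_matI)
    fix i j assume "i < dim_row E" "j < dim_col E"
    hence ij: "i < k" "j < k" by (auto simp: E_def)
    show "(E * E) $$ (i,j) = E $$ (i,j)"
      unfolding E_def dg_left[OF dg_carrier(1) ij] using ij by (auto simp: dg_def e_def)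
  qed (auto simp: E_def)
  have Et: "transpose_mat E = E"
    by (rule eq_matI) (auto simp: E_def dg_def)
  have EJ: "E * J = J * E"
  proof (rule eq_matI)
    fix i j assume "i < dim_row (J * E)" "j < dim_col (J * E)"
    hence ij: "i < k" "j < k" using J by (auto simp: E_def)
    show "(E * J) $$ (i,j) = (J * E) $$ (i,j)"
      unfolding E_def dg_left[OF J ij] dg_right[OF J ij]
      using jp[rule_format, OF ij] by (cases "J $$ (i,j) = 0") (auto simp: e_def)
  qed (use J in \<open>auto simp: E_def\<close>)
  have ER: "E * R = E * J"
  proof (rule eq_matI)
    fix i j assume "i < dim_row (E * J)" "j < dim_col (E * J)"
    hence ij: "i < k" "j < k" using J by (auto simp: E_def)
    show "(E * R) $$ (i,j) = (E * J) $$ (i,j)"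
      unfolding E_def dg_left[OF R ij] dg_left[OF J ij]
      using ij J by (auto simp: R_def dg_def e_def)
  qed (use J R in \<open>auto simp: E_def\<close>)
  have RE: "R * E = J * E"
  proof (rule eq_matI)
    fix i j assume "i < dim_row (J * E)" "j < dim_col (J * E)"
    hence ij: "i < k" "j < k" using J by (auto simp: E_def)
    show "(R * E) $$ (i,j) = (J * E) $$ (i,j)"
      unfolding E_def dg_right[OF R ij] dg_right[OF J ij]
      using ij J by (auto simp: R_def dg_def e_def)
  qed (use J R in \<open>auto simp: E_def\<close>)
  have "upper_triangular R"
    unfolding upper_triangular_def using up J by (auto simp: R_def dg_def)
  hence "det R = prod_list (diag_mat R)" using det_upper_triangular R by blast
  also have "\<dots> \<noteq> 0"
  proof -
    have "0 \<notin> set (diag_mat R)"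
      using J by (auto simp: diag_mat_def R_def dg_def e_def split: if_splits)
    thus ?thesis by (simp add: prod_list_zero_iff)
  qed
  finally have "R \<in> Units (ring_mat TYPE(complex) k ())"
    by (rule det_non_zero_imp_unit[OF R])
  then obtain Rinv where Rinv: "Rinv \<in> carrier_mat k k" and RR: "Rinv * R = 1\<^sub>m k" "R * Rinv = 1\<^sub>m k"
    unfolding Units_def ring_mat_def by auto
  have "mytr (transpose_mat J * (1\<^sub>m k - E)) = (\<Sum>i<k. (transpose_mat J * (1\<^sub>m k - E)) $$ (i,i))"
    unfolding mytr_def using J by simp
  also have "\<dots> = (\<Sum>i<k. 0)"
  proof (rule sum.cong[OF refl])
    fix i assume i: "i \<in> {..<k}"
    have "1\<^sub>m k - E = dg k (\<lambda>i. 1 - e i)" by (rule eq_matI) (auto simp: E_def dg_def)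
    hence "(transpose_mat J * (1\<^sub>m k - E)) $$ (i,i) = transpose_mat J $$ (i,i) * (1 - e i)"
      using dg_right[of "transpose_mat J" k k i i] i J by auto
    also have "\<dots> = 0" using i J by (auto simp: e_def)
    finally show "(transpose_mat J * (1\<^sub>m k - E)) $$ (i,i) = 0" .
  qed
  finally have tr0: "mytr (transpose_mat J * (1\<^sub>m k - E)) = 0" by simp
  show ?thesis
    by (rule exI[of _ E], rule exI[of _ R], rule exI[of _ Rinv]) (intro conjI E R Rinv EE Et EJ ER RE RR tr0)
qed



lemma eval_tr: assumes B: "B \<in> carrier_mat n n" and T: "T \<in> carrier_mat n n"
  shows "eval_tensor n B T = mytr (transpose_mat B * T)"
proof -
  have Bt: "transpose_mat B \<in> carrier_mat n n" using B by simp
  have "mytr (transpose_mat B * T) = (\<Sum>i<n. (transpose_mat B * T) $$ (i,i))"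
    unfolding mytr_def using B by simp
  also have "\<dots> = (\<Sum>i<n. \<Sum>k<n. transpose_mat B $$ (i,k) * T $$ (k,i))"
    by (rule sum.cong[OF refl], rule mult_entry[OF Bt T], auto)
  also have "\<dots> = (\<Sum>i<n. \<Sum>k<n. B $$ (k,i) * T $$ (k,i))"
    using B by (intro sum.cong refl) auto
  also have "\<dots> = eval_tensor n B T" unfolding eval_tensor_def by (rule sum.swap)
  finally show ?thesis by simp
qed

lemma tr_comm: assumes A: "A \<in> carrier_mat a b" and C: "C \<in> carrier_mat b a"
  shows "mytr (A * C) = mytr (C * A)"
proof -
  have "mytr (A * C) = (\<Sum>i<a. (A * C) $$ (i,i))"
    unfolding mytr_def using A by simp
  also have "\<dots> = (\<Sum>i<a. \<Sum>k<b. A $$ (i,k) * C $$ (k,i))"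
    by (rule sum.cong[OF refl], rule mult_entry[OF A C], auto)
  also have "\<dots> = (\<Sum>k<b. \<Sum>i<a. C $$ (k,i) * A $$ (i,k))"
    by (subst sum.swap) (simp add: mult.commute)
  also have "\<dots> = (\<Sum>k<b. (C * A) $$ (k,k))"
    by (rule sum.cong[OF refl], rule mult_entry[OF C A, symmetric], auto)
  also have "\<dots> = mytr (C * A)"
    unfolding mytr_def using C by simp
  finally show ?thesis .
qed

lemma tr_add: "dim_row A = dim_row C \<Longrightarrow> dim_col A = dim_col C \<Longrightarrow> dim_row A = dim_col A \<Longrightarrow>
   mytr (A + C) = mytr A + mytr C"
  unfolding mytr_def by (auto simp: sum.distrib)

lemma bil_mult: assumes F: "F \<in> carrier_mat m n" and C: "C \<in> carrier_mat m m"
  and v: "v \<in> carrier_vec n" and w: "w \<in> carrier_vec n"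
  shows "bil C (F *\<^sub>v v) (F *\<^sub>v w) = bil (transpose_mat F * C * F) v w"
proof -
  have z: "C *\<^sub>v (F *\<^sub>v w) \<in> carrier_vec m" using C F w by auto
  have "bil C (F *\<^sub>v v) (F *\<^sub>v w) = (F *\<^sub>v v) \<bullet> (C *\<^sub>v (F *\<^sub>v w))" unfolding bil_def ..
  also have "\<dots> = (transpose_mat (transpose_mat F) *\<^sub>v v) \<bullet> (C *\<^sub>v (F *\<^sub>v w))" by simp
  also have "\<dots> = v \<bullet> (transpose_mat F *\<^sub>v (C *\<^sub>v (F *\<^sub>v w)))"
    by (rule transpose_vec_mult_scalar[OF _ z v]) (use F in auto)
  also have "transpose_mat F *\<^sub>v (C *\<^sub>v (F *\<^sub>v w)) = (transpose_mat F * C * F) *\<^sub>v w"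
  proof -
    have Ft: "transpose_mat F \<in> carrier_mat n m" using F by simp
    have "(transpose_mat F * C * F) *\<^sub>v w = (transpose_mat F * C) *\<^sub>v (F *\<^sub>v w)"
      by (rule assoc_mult_mat_vec[OF _ F w]) (use Ft C in auto)
    also have "\<dots> = transpose_mat F *\<^sub>v (C *\<^sub>v (F *\<^sub>v w))"
      by (rule assoc_mult_mat_vec[OF Ft C]) (use F w in auto)
    finally show ?thesis by simp
  qed
  finally show ?thesis unfolding bil_def .
qed

lemma col_Rrad: assumes B: "B \<in> carrier_mat n n" and P: "P \<in> carrier_mat n k"
  and BP: "B * P = 0\<^sub>m n k" and i: "i < k"
  shows "col P i \<in> Rrad n B"
proof -
  have "B *\<^sub>v col P i = col (B * P) i" using col_mult2[OF B P i] by simp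
  also have "\<dots> = 0\<^sub>v n" using BP i by auto
  finally have z: "B *\<^sub>v col P i = 0\<^sub>v n" .
  show ?thesis unfolding Rrad_def bil_def using z P i by auto
qed

lemma col_Lrad: assumes B: "B \<in> carrier_mat n n" and P: "P \<in> carrier_mat n k"
  and BP: "transpose_mat B * P = 0\<^sub>m n k" and i: "i < k"
  shows "col P i \<in> Lrad n B"
proof -
  have "transpose_mat B *\<^sub>v col P i = col (transpose_mat B * P) i"
    using col_mult2[OF _ P i, of "transpose_mat B" n] B by simp
  also have "\<dots> = 0\<^sub>v n" using BP i by auto
  finally have z: "transpose_mat B *\<^sub>v col P i = 0\<^sub>v n" .
  have c: "col P i \<in> carrier_vec n" using P i by auto
  { fix w :: "complex vec" assume w: "w \<in> carrier_vec n"
    have "bil B (col P i) w = (transpose_mat B *\<^sub>v col P i) \<bullet> w"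
      unfolding bil_def by (rule transpose_vec_mult_scalar[OF B w c, symmetric])
    also have "\<dots> = 0" using z w by simp
    finally have "bil B (col P i) w = 0" . }
  thus ?thesis unfolding Lrad_def using c by auto
qed

lemma Rrad_D: assumes B: "B \<in> carrier_mat n n" and v: "v \<in> Rrad n B"
  shows "B *\<^sub>v v = 0\<^sub>v n"
proof (rule eq_vecI)
  fix i assume "i < dim_vec (0\<^sub>v n :: complex vec)"
  hence i: "i < n" by simp
  have vc: "v \<in> carrier_vec n" using v unfolding Rrad_def by auto
  have "bil B (unit_vec n i) v = 0" using v i unfolding Rrad_def by auto
  hence "unit_vec n i \<bullet> (B *\<^sub>v v) = 0" unfolding bil_def .
  thus "(B *\<^sub>v v) $ i = 0\<^sub>v n $ i" using i B vc by simp
qed (use B in auto)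

lemma Lrad_D: assumes B: "B \<in> carrier_mat n n" and v: "v \<in> Lrad n B"
  shows "transpose_mat B *\<^sub>v v = 0\<^sub>v n"
proof (rule eq_vecI)
  fix i assume "i < dim_vec (0\<^sub>v n :: complex vec)"
  hence i: "i < n" by simp
  have vc: "v \<in> carrier_vec n" using v unfolding Lrad_def by auto
  have "bil B v (unit_vec n i) = 0" using v i unfolding Lrad_def by auto
  hence "v \<bullet> (B *\<^sub>v unit_vec n i) = 0" unfolding bil_def .
  hence "(transpose_mat B *\<^sub>v v) \<bullet> unit_vec n i = 0"
    using transpose_vec_mult_scalar[OF B _ vc, of "unit_vec n i"] by simp
  thus "(transpose_mat B *\<^sub>v v) $ i = 0\<^sub>v n $ i" using i B vc by simp
qed (use B in auto)

lemma tensor_in_I: assumes P1: "P1 \<in> carrier_mat n k" and P2: "P2 \<in> carrier_mat n k"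
  and c1: "\<And>i. i < k \<Longrightarrow> col P1 i \<in> U" and c2: "\<And>i. i < k \<Longrightarrow> col P2 i \<in> W"
  shows "tensor_in n (P1 * transpose_mat P2) U W"
proof -
  have P2t: "transpose_mat P2 \<in> carrier_mat k n" using P2 by simp
  have eq: "P1 * transpose_mat P2 = mat n n (\<lambda>(a, c). \<Sum>i<k. col P1 i $ a * col P2 i $ c)"
  proof (rule eq_matI)
    fix a c assume "a < dim_row (mat n n (\<lambda>(a, c). \<Sum>i<k. col P1 i $ a * col P2 i $ c))"
      "c < dim_col (mat n n (\<lambda>(a, c). \<Sum>i<k. col P1 i $ a * col P2 i $ c))"
    hence a: "a < n" and c: "c < n" by auto
    show "(P1 * transpose_mat P2) $$ (a,c) = mat n n (\<lambda>(a, c). \<Sum>i<k. col P1 i $ a * col P2 i $ c) $$ (a,c)"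
      unfolding mult_entry[OF P1 P2t a c] using a c P1 P2 by (auto intro!: sum.cong)
  qed (use P1 P2 in auto)
  show ?thesis unfolding tensor_in_def
    by (rule exI[of _ k], rule exI[of _ "\<lambda>i. col P1 i"], rule exI[of _ "\<lambda>i. col P2 i"])
      (use eq c1 c2 in auto)
qed

lemma tensor_in_D: assumes B: "B \<in> carrier_mat n n" and t: "tensor_in n T (Rrad n B) (Lrad n B)"
  shows "\<exists>k P1 P2. P1 \<in> carrier_mat n k \<and> P2 \<in> carrier_mat n k \<and> T = P1 * transpose_mat P2 \<and>
     B * P1 = 0\<^sub>m n k \<and> transpose_mat B * P2 = 0\<^sub>m n k"
proof -
  from t obtain k :: nat and us ws where uw: "\<forall>i<k. us i \<in> Rrad n B \<and> ws i \<in> Lrad n B"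
    and T: "T = mat n n (\<lambda>(a, c). \<Sum>i<k. us i $ a * ws i $ c)" unfolding tensor_in_def
    apply (elim exE conjE)
    apply (rule that)
     apply assumption+
    done
  define P1 where "P1 = mat n k (\<lambda>(a,i). us i $ a)"
  define P2 where "P2 = mat n k (\<lambda>(a,i). ws i $ a)"
  have P1: "P1 \<in> carrier_mat n k" and P2: "P2 \<in> carrier_mat n k" unfolding P1_def P2_def by auto
  have uc: "i < k \<Longrightarrow> us i \<in> carrier_vec n" for i using uw unfolding Rrad_def by auto
  have wc: "i < k \<Longrightarrow> ws i \<in> carrier_vec n" for i using uw unfolding Lrad_def by auto
  have cP1: "i < k \<Longrightarrow> col P1 i = us i" for i using uc[of i] unfolding P1_def by (intro eq_vecI) auto
  have cP2: "i < k \<Longrightarrow> col P2 i = ws i" for i using wc[of i] unfolding P2_def by (intro eq_vecI) auto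
  have P2t: "transpose_mat P2 \<in> carrier_mat k n" using P2 by simp
  have "T = P1 * transpose_mat P2"
  proof (rule eq_matI)
    fix a c assume "a < dim_row (P1 * transpose_mat P2)" "c < dim_col (P1 * transpose_mat P2)"
    hence a: "a < n" and c: "c < n" using P1 P2 by auto
    show "T $$ (a,c) = (P1 * transpose_mat P2) $$ (a,c)"
      unfolding mult_entry[OF P1 P2t a c] T using a c P1 P2 by (auto simp: P1_def P2_def intro!: sum.cong)
  qed (use P1 P2 T in auto)
  moreover have "B * P1 = 0\<^sub>m n k"
  proof (rule eq_matI)
    fix a i assume "a < dim_row (0\<^sub>m n k :: complex mat)" "i < dim_col (0\<^sub>m n k :: complex mat)"
    hence a: "a < n" and i: "i < k" by auto
    have "(B * P1) $$ (a,i) = col (B * P1) i $ a" using a i B P1 by simp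
    also have "\<dots> = (B *\<^sub>v us i) $ a" using cP1[OF i] col_mult2[OF B P1 i] by simp
    also have "\<dots> = 0" using Rrad_D[OF B, of "us i"] uw i a by simp
    finally show "(B * P1) $$ (a,i) = 0\<^sub>m n k $$ (a,i)" using a i by simp
  qed (use B P1 in auto)
  moreover have "transpose_mat B * P2 = 0\<^sub>m n k"
  proof (rule eq_matI)
    fix a i assume "a < dim_row (0\<^sub>m n k :: complex mat)" "i < dim_col (0\<^sub>m n k :: complex mat)"
    hence a: "a < n" and i: "i < k" by auto
    have "(transpose_mat B * P2) $$ (a,i) = col (transpose_mat B * P2) i $ a" using a i B P2 by simp
    also have "\<dots> = (transpose_mat B *\<^sub>v ws i) $ a" using cP2[OF i] col_mult2[OF _ P2 i, of "transpose_mat B" n] B by simp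
    also have "\<dots> = 0" using Lrad_D[OF B, of "ws i"] uw i a by simp
    finally show "(transpose_mat B * P2) $$ (a,i) = 0\<^sub>m n k $$ (a,i)" using a i by simp
  qed (use B P2 in auto)
  ultimately show ?thesis using P1 P2 by blast
qed



lemma sum_delta1: fixes N f :: nat shows "(\<Sum>c<N. if c = f then g c else 0) = (if f < N then g f else (0::complex))"
  by (subst sum.delta) auto

definition Sx :: "nat \<Rightarrow> complex mat" where "Sx m = mat m (2*m) (\<lambda>(p,c). if c = 2*p then 1 else 0)"
definition Sy :: "nat \<Rightarrow> complex mat" where "Sy m = mat m (2*m) (\<lambda>(p,c). if c = 2*p+1 then 1 else 0)"

lemma S_carrier[simp]: "Sx m \<in> carrier_mat m (2*m)" "Sy m \<in> carrier_mat m (2*m)"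
  "dim_row (Sx m) = m" "dim_col (Sx m) = 2*m" "dim_row (Sy m) = m" "dim_col (Sy m) = 2*m"
  unfolding Sx_def Sy_def by auto

lemma SxSxt: "Sx m * transpose_mat (Sx m) = 1\<^sub>m m"
proof (rule eq_matI)
  fix p q assume "p < dim_row (1\<^sub>m m)" "q < dim_col (1\<^sub>m m)"
  hence p: "p < m" and q: "q < m" by auto
  have "(Sx m * transpose_mat (Sx m)) $$ (p,q) = (\<Sum>c<2*m. Sx m $$ (p,c) * transpose_mat (Sx m) $$ (c,q))"
    by (rule mult_entry[of _ m "2*m" _ m]) (use p q in auto)
  also have "\<dots> = (\<Sum>c<2*m. if c = 2*p then (if c = 2*q then 1 else 0) else 0)"
    by (rule sum.cong) (use p q in \<open>auto simp: Sx_def\<close>)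
  also have "\<dots> = 1\<^sub>m m $$ (p,q)" using p q by (simp add: sum_delta1)
  finally show "(Sx m * transpose_mat (Sx m)) $$ (p,q) = 1\<^sub>m m $$ (p,q)" .
qed auto

lemma SySyt: "Sy m * transpose_mat (Sy m) = 1\<^sub>m m"
proof (rule eq_matI)
  fix p q assume "p < dim_row (1\<^sub>m m)" "q < dim_col (1\<^sub>m m)"
  hence p: "p < m" and q: "q < m" by auto
  have "(Sy m * transpose_mat (Sy m)) $$ (p,q) = (\<Sum>c<2*m. Sy m $$ (p,c) * transpose_mat (Sy m) $$ (c,q))"
    by (rule mult_entry[of _ m "2*m" _ m]) (use p q in auto)
  also have "\<dots> = (\<Sum>c<2*m. if c = 2*p+1 then (if c = 2*q+1 then 1 else 0) else 0)"
    by (rule sum.cong) (use p q in \<open>auto simp: Sy_def\<close>)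
  also have "\<dots> = 1\<^sub>m m $$ (p,q)" using p q by (simp add: sum_delta1)
  finally show "(Sy m * transpose_mat (Sy m)) $$ (p,q) = 1\<^sub>m m $$ (p,q)" .
qed auto

lemma SxSyt: "Sx m * transpose_mat (Sy m) = 0\<^sub>m m m"
proof (rule eq_matI)
  fix p q assume "p < dim_row (0\<^sub>m m m :: complex mat)" "q < dim_col (0\<^sub>m m m :: complex mat)"
  hence p: "p < m" and q: "q < m" by auto
  have "(Sx m * transpose_mat (Sy m)) $$ (p,q) = (\<Sum>c<2*m. Sx m $$ (p,c) * transpose_mat (Sy m) $$ (c,q))"
    by (rule mult_entry[of _ m "2*m" _ m]) (use p q in auto)
  also have "\<dots> = (\<Sum>c<2*m. if c = 2*p then (if c = 2*q+1 then 1 else 0) else 0)"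
    by (rule sum.cong) (use p q in \<open>auto simp: Sx_def Sy_def\<close>)
  also have "\<dots> = 0" using p q by (simp add: sum_delta1) presburger
  finally show "(Sx m * transpose_mat (Sy m)) $$ (p,q) = 0\<^sub>m m m $$ (p,q)" using p q by simp
qed auto

lemma SySxt: "Sy m * transpose_mat (Sx m) = 0\<^sub>m m m"
proof (rule eq_matI)
  fix p q assume "p < dim_row (0\<^sub>m m m :: complex mat)" "q < dim_col (0\<^sub>m m m :: complex mat)"
  hence p: "p < m" and q: "q < m" by auto
  have "(Sy m * transpose_mat (Sx m)) $$ (p,q) = (\<Sum>c<2*m. Sy m $$ (p,c) * transpose_mat (Sx m) $$ (c,q))"
    by (rule mult_entry[of _ m "2*m" _ m]) (use p q in auto)
  also have "\<dots> = (\<Sum>c<2*m. if c = 2*p+1 then (if c = 2*q then 1 else 0) else 0)"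
    by (rule sum.cong) (use p q in \<open>auto simp: Sx_def Sy_def\<close>)
  also have "\<dots> = 0" using p q by (simp add: sum_delta1) presburger
  finally show "(Sy m * transpose_mat (Sx m)) $$ (p,q) = 0\<^sub>m m m $$ (p,q)" using p q by simp
qed auto

lemma sum_delta_half: fixes c m :: nat assumes cm0: "c < 2*m"
  shows "(\<Sum>p<m. if c = 2*p then g p else 0) = (if even c then g (c div 2) else (0::complex))"
    "(\<Sum>p<m. if c = 2*p+1 then g p else 0) = (if odd c then g (c div 2) else (0::complex))"
proof -
  have assms: "c div 2 < m" using cm0 by presburger
  have "(\<Sum>p<m. if c = 2*p then g p else 0) = (\<Sum>p<m. if p = c div 2 then (if even c then g p else 0) else 0)"
    by (rule sum.cong) auto
  also have "\<dots> = (if even c then g (c div 2) else 0)" using assms by (simp add: sum_delta1)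
  finally show "(\<Sum>p<m. if c = 2*p then g p else 0) = (if even c then g (c div 2) else (0::complex))" .
  have "(\<Sum>p<m. if c = 2*p+1 then g p else 0) = (\<Sum>p<m. if p = c div 2 then (if odd c then g p else 0) else 0)"
    by (rule sum.cong) auto
  also have "\<dots> = (if odd c then g (c div 2) else 0)" using assms by (simp add: sum_delta1)
  finally show "(\<Sum>p<m. if c = 2*p+1 then g p else 0) = (if odd c then g (c div 2) else (0::complex))" .
qed

lemma SS1: "transpose_mat (Sx m) * Sx m + transpose_mat (Sy m) * Sy m = 1\<^sub>m (2*m)"
proof (rule eq_matI)
  fix c d assume "c < dim_row (1\<^sub>m (2*m))" "d < dim_col (1\<^sub>m (2*m))"
  hence c: "c < 2*m" and d: "d < 2*m" by auto
  have "(transpose_mat (Sx m) * Sx m) $$ (c,d) = (\<Sum>p<m. transpose_mat (Sx m) $$ (c,p) * Sx m $$ (p,d))"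
    by (rule mult_entry[of _ "2*m" m _ "2*m"]) (use c d in auto)
  also have "\<dots> = (\<Sum>p<m. if c = 2*p then (if d = 2*p then 1 else 0) else 0)"
    by (rule sum.cong) (use c d in \<open>auto simp: Sx_def\<close>)
  also have "\<dots> = (if even c then (if d = c then 1 else 0) else 0)"
    unfolding sum_delta_half(1)[OF c] by auto
  finally have 1: "(transpose_mat (Sx m) * Sx m) $$ (c,d) = (if even c then (if d = c then 1 else 0) else 0)" .
  have "(transpose_mat (Sy m) * Sy m) $$ (c,d) = (\<Sum>p<m. transpose_mat (Sy m) $$ (c,p) * Sy m $$ (p,d))"
    by (rule mult_entry[of _ "2*m" m _ "2*m"]) (use c d in auto)
  also have "\<dots> = (\<Sum>p<m. if c = 2*p+1 then (if d = 2*p+1 then 1 else 0) else 0)"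
    by (rule sum.cong) (use c d in \<open>auto simp: Sy_def\<close>)
  also have "\<dots> = (if odd c then (if d = c then 1 else 0) else 0)"
    unfolding sum_delta_half(2)[OF c] by auto
  finally have 2: "(transpose_mat (Sy m) * Sy m) $$ (c,d) = (if odd c then (if d = c then 1 else 0) else 0)" .
  show "(transpose_mat (Sx m) * Sx m + transpose_mat (Sy m) * Sy m) $$ (c,d) = 1\<^sub>m (2*m) $$ (c,d)"
    using 1 2 c d by auto
qed auto

lemma SJ2: "transpose_mat (Sx m) * Sy m = J2perp m"
proof (rule eq_matI)
  fix c d assume "c < dim_row (J2perp m)" "d < dim_col (J2perp m)"
  hence c: "c < 2*m" and d: "d < 2*m" by (auto simp: J2perp_def)
  have "(transpose_mat (Sx m) * Sy m) $$ (c,d) = (\<Sum>p<m. transpose_mat (Sx m) $$ (c,p) * Sy m $$ (p,d))"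
    by (rule mult_entry[of _ "2*m" m _ "2*m"]) (use c d in auto)
  also have "\<dots> = (\<Sum>p<m. if c = 2*p then (if d = 2*p+1 then 1 else 0) else 0)"
    by (rule sum.cong) (use c d in \<open>auto simp: Sx_def Sy_def\<close>)
  also have "\<dots> = J2perp m $$ (c,d)"
    unfolding sum_delta_half(1)[OF c] using c d by (auto simp: J2perp_def)
  finally show "(transpose_mat (Sx m) * Sy m) $$ (c,d) = J2perp m $$ (c,d)" .
qed (auto simp: J2perp_def)

definition E1 :: "nat \<Rightarrow> nat \<Rightarrow> complex mat" where "E1 a b = mat (a+b) a (\<lambda>(i,j). if i = j then 1 else 0)"
definition E2 :: "nat \<Rightarrow> nat \<Rightarrow> complex mat" where "E2 a b = mat (a+b) b (\<lambda>(i,j). if i = j + a then 1 else 0)"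

lemma E_carrier[simp]: "E1 a b \<in> carrier_mat (a+b) a" "E2 a b \<in> carrier_mat (a+b) b"
  "dim_row (E1 a b) = a+b" "dim_col (E1 a b) = a" "dim_row (E2 a b) = a+b" "dim_col (E2 a b) = b"
  unfolding E1_def E2_def by auto

lemma E1_left: assumes "A \<in> carrier_mat a c" "i < a+b" "j < c"
  shows "(E1 a b * A) $$ (i,j) = (if i < a then A $$ (i,j) else 0)"
proof -
  have "(E1 a b * A) $$ (i,j) = (\<Sum>l<a. E1 a b $$ (i,l) * A $$ (l,j))"
    by (rule mult_entry[OF E_carrier(1) assms])
  also have "\<dots> = (\<Sum>l<a. if l = i then A $$ (i,j) else 0)"
    by (rule sum.cong) (use assms in \<open>auto simp: E1_def\<close>)
  finally show ?thesis by (simp add: sum_delta1)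
qed

lemma E2_left: assumes "A \<in> carrier_mat b c" "i < a+b" "j < c"
  shows "(E2 a b * A) $$ (i,j) = (if a \<le> i then A $$ (i-a,j) else 0)"
proof -
  have "(E2 a b * A) $$ (i,j) = (\<Sum>l<b. E2 a b $$ (i,l) * A $$ (l,j))"
    by (rule mult_entry[OF E_carrier(2) assms])
  also have "\<dots> = (\<Sum>l<b. if l = i - a then (if a \<le> i then A $$ (i-a,j) else 0) else 0)"
    by (rule sum.cong) (use assms in \<open>auto simp: E2_def\<close>)
  finally show ?thesis using assms by (auto simp: sum_delta1)
qed

lemma E1t_left: assumes "A \<in> carrier_mat (a+b) c" "i < a" "j < c"
  shows "(transpose_mat (E1 a b) * A) $$ (i,j) = A $$ (i,j)"
proof -
  have "(transpose_mat (E1 a b) * A) $$ (i,j) = (\<Sum>l<a+b. transpose_mat (E1 a b) $$ (i,l) * A $$ (l,j))"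
    by (rule mult_entry[OF _ assms]) simp
  also have "\<dots> = (\<Sum>l<a+b. if l = i then A $$ (i,j) else 0)"
    by (rule sum.cong) (use assms in \<open>auto simp: E1_def\<close>)
  finally show ?thesis using assms by (simp add: sum_delta1)
qed

lemma E2t_left: assumes "A \<in> carrier_mat (a+b) c" "i < b" "j < c"
  shows "(transpose_mat (E2 a b) * A) $$ (i,j) = A $$ (i+a,j)"
proof -
  have "(transpose_mat (E2 a b) * A) $$ (i,j) = (\<Sum>l<a+b. transpose_mat (E2 a b) $$ (i,l) * A $$ (l,j))"
    by (rule mult_entry[OF _ assms]) simp
  also have "\<dots> = (\<Sum>l<a+b. if l = i + a then A $$ (i+a,j) else 0)"
    by (rule sum.cong) (use assms in \<open>auto simp: E2_def\<close>)
  finally show ?thesis using assms by (simp add: sum_delta1)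
qed

lemma E1tE1: "transpose_mat (E1 a b) * E1 a b = 1\<^sub>m a"
proof (rule eq_matI)
  fix i j assume "i < dim_row (1\<^sub>m a)" "j < dim_col (1\<^sub>m a)"
  hence i: "i < a" and j: "j < a" by auto
  show "(transpose_mat (E1 a b) * E1 a b) $$ (i,j) = 1\<^sub>m a $$ (i,j)"
    using E1t_left[OF E_carrier(1) i j] i j by (simp add: E1_def)
qed auto
lemma E2tE2: "transpose_mat (E2 a b) * E2 a b = 1\<^sub>m b"
proof (rule eq_matI)
  fix i j assume "i < dim_row (1\<^sub>m b)" "j < dim_col (1\<^sub>m b)"
  hence i: "i < b" and j: "j < b" by auto
  show "(transpose_mat (E2 a b) * E2 a b) $$ (i,j) = 1\<^sub>m b $$ (i,j)"
    using E2t_left[OF E_carrier(2) i j] i j by (simp add: E2_def)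
qed auto
lemma E1tE2: "transpose_mat (E1 a b) * E2 a b = 0\<^sub>m a b"
proof (rule eq_matI)
  fix i j assume "i < dim_row (0\<^sub>m a b :: complex mat)" "j < dim_col (0\<^sub>m a b :: complex mat)"
  hence i: "i < a" and j: "j < b" by auto
  show "(transpose_mat (E1 a b) * E2 a b) $$ (i,j) = 0\<^sub>m a b $$ (i,j)"
    using E1t_left[OF E_carrier(2) i j] i j by (simp add: E2_def)
qed auto
lemma E2tE1: "transpose_mat (E2 a b) * E1 a b = 0\<^sub>m b a"
proof (rule eq_matI)
  fix i j assume "i < dim_row (0\<^sub>m b a :: complex mat)" "j < dim_col (0\<^sub>m b a :: complex mat)"
  hence i: "i < b" and j: "j < a" by auto
  show "(transpose_mat (E2 a b) * E1 a b) $$ (i,j) = 0\<^sub>m b a $$ (i,j)"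
    using E2t_left[OF E_carrier(1) i j] i j by (simp add: E1_def)
qed auto
lemma EEt: "E1 a b * transpose_mat (E1 a b) + E2 a b * transpose_mat (E2 a b) = 1\<^sub>m (a+b)"
proof (rule eq_matI)
  fix i j assume "i < dim_row (1\<^sub>m (a+b))" "j < dim_col (1\<^sub>m (a+b))"
  hence i: "i < a+b" and j: "j < a+b" by auto
  have t1: "transpose_mat (E1 a b) \<in> carrier_mat a (a+b)" and t2: "transpose_mat (E2 a b) \<in> carrier_mat b (a+b)" by auto
  show "(E1 a b * transpose_mat (E1 a b) + E2 a b * transpose_mat (E2 a b)) $$ (i,j) = 1\<^sub>m (a+b) $$ (i,j)"
    using i j E1_left[OF t1 i j] E2_left[OF t2 i j] by (auto simp: E1_def E2_def)
qed auto

lemma four_block_E: assumes A: "A \<in> carrier_mat a a" and D: "D \<in> carrier_mat b b"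
  shows "four_block_mat A (0\<^sub>m a b) (0\<^sub>m b a) D =
    E1 a b * (A * transpose_mat (E1 a b)) + E2 a b * (D * transpose_mat (E2 a b))"
proof (rule eq_matI)
  fix i j assume "i < dim_row (E1 a b * (A * transpose_mat (E1 a b)) + E2 a b * (D * transpose_mat (E2 a b)))"
    "j < dim_col (E1 a b * (A * transpose_mat (E1 a b)) + E2 a b * (D * transpose_mat (E2 a b)))"
  hence i: "i < a+b" and j: "j < a+b" by auto
  have c1: "A * transpose_mat (E1 a b) \<in> carrier_mat a (a+b)" using A by auto
  have c2: "D * transpose_mat (E2 a b) \<in> carrier_mat b (a+b)" using D by auto
  have r1: "i' < a \<Longrightarrow> (A * transpose_mat (E1 a b)) $$ (i',j) = (if j < a then A $$ (i',j) else 0)" for i'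
  proof -
    assume i': "i' < a"
    have "(A * transpose_mat (E1 a b)) $$ (i',j) = (\<Sum>l<a. A $$ (i',l) * transpose_mat (E1 a b) $$ (l,j))"
      by (rule mult_entry[OF A _ i' j]) simp
    also have "\<dots> = (\<Sum>l<a. if l = j then A $$ (i',j) else 0)"
      by (rule sum.cong) (use j in \<open>auto simp: E1_def\<close>)
    finally show ?thesis by (simp add: sum_delta1)
  qed
  have r2: "i' < b \<Longrightarrow> (D * transpose_mat (E2 a b)) $$ (i',j) = (if a \<le> j then D $$ (i',j-a) else 0)" for i'
  proof -
    assume i': "i' < b"
    have "(D * transpose_mat (E2 a b)) $$ (i',j) = (\<Sum>l<b. D $$ (i',l) * transpose_mat (E2 a b) $$ (l,j))"
      by (rule mult_entry[OF D _ i' j]) simp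
    also have "\<dots> = (\<Sum>l<b. if l = j - a then (if a \<le> j then D $$ (i',j-a) else 0) else 0)"
      by (rule sum.cong) (use j in \<open>auto simp: E2_def\<close>)
    finally show ?thesis using j by (auto simp: sum_delta1)
  qed
  show "four_block_mat A (0\<^sub>m a b) (0\<^sub>m b a) D $$ (i,j) =
    (E1 a b * (A * transpose_mat (E1 a b)) + E2 a b * (D * transpose_mat (E2 a b))) $$ (i,j)"
    using i j A D E1_left[OF c1 i j] E2_left[OF c2 i j] r1 r2 by auto
qed (use A D in auto)



lemma assoc_ext: "X * Y = R \<Longrightarrow> dim_col X = dim_row Y \<Longrightarrow> dim_col Y = dim_row Z \<Longrightarrow> X * (Y * Z) = R * Z"
  using mA by metis

lemma assoc_ext3: "X1 * X2 * X3 = R \<Longrightarrow> dim_col X1 = dim_row X2 \<Longrightarrow> dim_col X2 = dim_row X3 \<Longrightarrow>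
  dim_col X3 = dim_row Z \<Longrightarrow> X1 * (X2 * (X3 * Z)) = R * Z"
proof -
  assume h: "X1 * X2 * X3 = R" "dim_col X1 = dim_row X2" "dim_col X2 = dim_row X3" "dim_col X3 = dim_row Z"
  have e: "X1 * (X2 * X3) = R" using h(1) mA[OF h(2,3)] by simp
  have "X1 * (X2 * (X3 * Z)) = X1 * (X2 * X3 * Z)" using mA[OF h(3) h(4)] by simp
  also have "\<dots> = X1 * (X2 * X3) * Z" using mA[of X1 "X2 * X3" Z] h by simp
  also have "\<dots> = R * Z" using e by simp
  finally show ?thesis .
qed

lemma mm[simp]: "A - A = 0\<^sub>m (dim_row A) (dim_col (A :: 'a :: group_add mat))"
  by (intro eq_matI) auto

lemma cD: "A \<in> carrier_mat a b \<Longrightarrow> dim_row A = a \<and> dim_col A = b" by auto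

lemma J2_carrier[simp]: "J2perp m \<in> carrier_mat (2*m) (2*m)" "dim_row (J2perp m) = 2*m" "dim_col (J2perp m) = 2*m"
  unfolding J2perp_def by auto

lemma mpz[simp]: "dim_row A = dim_row C \<Longrightarrow> dim_col A = dim_col C \<Longrightarrow> A - C + C = (A::'a::ab_group_add mat)"
  by (intro eq_matI) auto

lemma pmz[simp]: "dim_row A = dim_row C \<Longrightarrow> dim_col A = dim_col C \<Longrightarrow> A + (C - A) = (C::'a::ab_group_add mat)"
  by (intro eq_matI) auto

lemma minus_zero_eq: assumes h: "A - C = 0\<^sub>m r c" "dim_row C = r" "dim_col C = c"
  "dim_row A = r" "dim_col A = c" shows "A = (C::'a::ab_group_add mat)"
proof (intro eq_matI)
  fix i j assume ij: "i < dim_row C" "j < dim_col C"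
  have "(A - C) $$ (i,j) = 0" using h ij by simp
  thus "A $$ (i,j) = C $$ (i,j)" using h(2-5) ij by simp
qed (use h in auto)

lemma main_constr:
  fixes n :: nat and B T :: "complex mat"
  assumes E0: "E0_obj n B T"
  shows "\<exists>m n' B' T' T''. m > 0 \<and> E0_obj (2*m) (J2perp m) T'' \<and> infl_triple n' B' T'
     \<and> E0_iso n B T (n' + 2*m) (infl_form n' B' (2*m) (J2perp m)) (infl_tensor n' T' (2*m) T'')"
proof -
  have B: "B \<in> carrier_mat n n" and tin: "tensor_in n T (Rrad n B) (Lrad n B)"
    and ev1: "eval_tensor n B T = 1" using E0 unfolding E0_obj_def by auto
  note [simp] = cD[OF B]
  from tensor_in_D[OF B tin] obtain k U0 W0 where U0: "U0 \<in> carrier_mat n k" and W0: "W0 \<in> carrier_mat n k"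
    and T0: "T = U0 * transpose_mat W0" and BU0: "B * U0 = 0\<^sub>m n k" and BW0: "transpose_mat B * W0 = 0\<^sub>m n k"
    by blast
  note [simp] = cD[OF U0] cD[OF W0]
  define M where "M = transpose_mat U0 * B * W0"
  have M: "M \<in> carrier_mat k k" unfolding M_def carrier_mat_def by simp
  obtain as where "char_poly M = (\<Prod>a\<leftarrow>as. [:- a, 1:])" using char_poly_factorized[OF M] by auto
  then obtain n_as where jnf: "jordan_nf M n_as" using jordan_nf_exists[OF M] by blast
  define J where "J = jordan_matrix n_as"
  from jnf obtain P Q where sw: "similar_mat_wit M J P Q"
    unfolding jordan_nf_def similar_mat_def J_def by blast
  from similar_mat_witD2[OF M sw] have PQ: "P * Q = 1\<^sub>m k" and QP: "Q * P = 1\<^sub>m k"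
    and MPJQ: "M = P * J * Q" and J: "J \<in> carrier_mat k k" and P: "P \<in> carrier_mat k k"
    and Q: "Q \<in> carrier_mat k k" by auto
  note [simp] = cD[OF J] cD[OF P] cD[OF Q]
  have ksum: "sum_list (map fst n_as) = k" using cD[OF J] unfolding J_def by simp
  have up: "\<forall>i<k. \<forall>j<i. J $$ (i,j) = 0"
    using jordan_matrix_upper_triangular[of _ n_as] ksum unfolding J_def by auto
  have jp: "\<forall>i<k. \<forall>j<k. J $$ (i,j) \<noteq> 0 \<longrightarrow> J $$ (i,i) = J $$ (j,j)"
    using jm_prop[of _ n_as] ksum unfolding J_def by auto
  define U where "U = U0 * transpose_mat Q"
  define W where "W = W0 * P"
  have U: "U \<in> carrier_mat n k" and W: "W \<in> carrier_mat n k"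
    unfolding U_def W_def carrier_mat_def by auto
  note [simp] = cD[OF U] cD[OF W]
  have TUW: "T = U * transpose_mat W"
  proof -
    have "U * transpose_mat W = U0 * (transpose_mat (P * Q) * transpose_mat W0)"
      unfolding U_def W_def by (simp add: tM mA)
    also have "\<dots> = T" unfolding PQ T0 by simp
    finally show ?thesis by simp
  qed
  have BU: "B * U = 0\<^sub>m n k" unfolding U_def by (simp add: mA[symmetric] BU0)
  have BW: "transpose_mat B * W = 0\<^sub>m n k" unfolding W_def by (simp add: mA[symmetric] BW0)
  have UBW: "transpose_mat U * B * W = J"
  proof -
    have "transpose_mat U * B * W = Q * (M * P)" unfolding U_def W_def M_def by (simp add: tM mA)
    also have "\<dots> = (Q * P) * J * (Q * P)" unfolding MPJQ by (simp add: mA)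
    finally show ?thesis unfolding QP by simp
  qed
  from fitting[OF J up jp] obtain E R Rinv where Ec: "E \<in> carrier_mat k k" and Rc: "R \<in> carrier_mat k k"
    and Ri: "Rinv \<in> carrier_mat k k" and EE: "E * E = E" and Et: "transpose_mat E = E"
    and EJ: "E * J = J * E" and ER: "E * R = E * J" and RE: "R * E = J * E"
    and RRi: "R * Rinv = 1\<^sub>m k" and RiR: "Rinv * R = 1\<^sub>m k"
    and tr0: "mytr (transpose_mat J * (1\<^sub>m k - E)) = 0" by blast
  note [simp] = cD[OF Ec] cD[OF Rc] cD[OF Ri]
  from idem_factor[OF Ec EE] obtain m Z \<Phi> where Z: "Z \<in> carrier_mat k m" and Ph: "\<Phi> \<in> carrier_mat m k"
    and PhZ: "\<Phi> * Z = 1\<^sub>m m" and ZPh: "Z * \<Phi> = E" by blast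
  note [simp] = cD[OF Z] cD[OF Ph]
  have PhE: "\<Phi> * E = \<Phi>" unfolding ZPh[symmetric] by (simp add: mA[symmetric] PhZ)
  have EZ: "E * Z = Z" unfolding ZPh[symmetric] by (simp add: mA PhZ)
  have ERc: "E * R = R * E" using ER RE EJ by simp
  have RiE: "Rinv * E = E * Rinv"
  proof -
    have "Rinv * E = Rinv * E * (R * Rinv)" unfolding RRi by simp
    also have "\<dots> = Rinv * (E * R) * Rinv" by (simp add: mA)
    also have "\<dots> = (Rinv * R) * E * Rinv" unfolding ERc by (simp add: mA)
    finally show ?thesis unfolding RiR by simp
  qed
  define Xm where "Xm = U * transpose_mat \<Phi>"
  define Ym where "Ym = W * (Rinv * Z)"
  have Xm: "Xm \<in> carrier_mat n m" and Ym: "Ym \<in> carrier_mat n m"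
    unfolding Xm_def Ym_def carrier_mat_def by auto
  note [simp] = cD[OF Xm] cD[OF Ym]
  have XBY: "transpose_mat Xm * B * Ym = 1\<^sub>m m"
  proof -
    have "transpose_mat Xm * B * Ym = \<Phi> * (transpose_mat U * B * W) * Rinv * Z"
      unfolding Xm_def Ym_def by (simp add: tM mA)
    also have "\<dots> = (\<Phi> * E) * J * Rinv * Z" unfolding UBW PhE ..
    also have "\<dots> = \<Phi> * (E * R) * Rinv * Z" unfolding ER by (simp add: mA)
    also have "\<dots> = \<Phi> * E * (R * Rinv) * Z" by (simp add: mA)
    also have "\<dots> = \<Phi> * Z" unfolding RRi PhE by simp
    finally show ?thesis using PhZ by simp
  qed
  have BX: "B * Xm = 0\<^sub>m n m" unfolding Xm_def by (simp add: mA[symmetric] BU)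
  have BtY: "transpose_mat B * Ym = 0\<^sub>m n m" unfolding Ym_def by (simp add: mA[symmetric] BW)
  have YtB: "transpose_mat Ym * B = 0\<^sub>m m n"
  proof -
    have "transpose_mat Ym * B = transpose_mat (transpose_mat B * Ym)" by (simp add: tM)
    thus ?thesis unfolding BtY by simp
  qed
  have XtBt: "transpose_mat Xm * transpose_mat B = 0\<^sub>m m n"
  proof -
    have "transpose_mat Xm * transpose_mat B = transpose_mat (B * Xm)" by (simp add: tM)
    thus ?thesis unfolding BX by simp
  qed
  have YtBtX: "transpose_mat Ym * transpose_mat B * Xm = 1\<^sub>m m"
  proof -
    have "transpose_mat Ym * transpose_mat B * Xm = transpose_mat (transpose_mat Xm * B * Ym)"
      by (simp add: tM mA)
    thus ?thesis unfolding XBY by simp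
  qed
  define Xall where "Xall = Xm * Sx m + Ym * Sy m"
  define K where "K = transpose_mat (Sx m) * (transpose_mat Ym * transpose_mat B) + transpose_mat (Sy m) * (transpose_mat Xm * B)"
  have Xall: "Xall \<in> carrier_mat n (2*m)" and K: "K \<in> carrier_mat (2*m) n"
    unfolding Xall_def K_def carrier_mat_def by auto
  note [simp] = cD[OF Xall] cD[OF K]
  note ext = BX BtY YtB XtBt SxSxt SySyt SxSyt SySxt assoc_ext[OF BX] assoc_ext[OF BtY] assoc_ext[OF YtB] assoc_ext[OF XtBt]
    assoc_ext3[OF XBY] assoc_ext3[OF YtBtX] assoc_ext[OF SxSxt] assoc_ext[OF SySyt]
    assoc_ext[OF SxSyt] assoc_ext[OF SySxt]
  have KX: "K * Xall = 1\<^sub>m (2*m)"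
    unfolding K_def Xall_def by (simp add: dL dR mA ext SS1)
  have XtBX: "transpose_mat Xall * B * Xall = J2perp m"
    unfolding Xall_def by (simp add: dL dR mA ext tA tM SJ2)
  have J2K: "J2perp m * K = transpose_mat Xall * B"
    unfolding Xall_def K_def SJ2[symmetric] by (simp add: dL dR mA ext tA tM)
  have J2tK: "transpose_mat (J2perp m) * K = transpose_mat Xall * transpose_mat B"
    unfolding Xall_def K_def SJ2[symmetric] by (simp add: dL dR mA ext tA tM)
  have XSx: "Xall * transpose_mat (Sx m) = Xm"
    unfolding Xall_def by (simp add: dL dR mA ext)
  have XSy: "Xall * transpose_mat (Sy m) = Ym"
    unfolding Xall_def by (simp add: dL dR mA ext)
  define Pi where "Pi = 1\<^sub>m n - Xall * K"
  have Pi: "Pi \<in> carrier_mat n n" unfolding Pi_def carrier_mat_def by simp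
  note [simp] = cD[OF Pi]
  have XKXK: "Xall * (K * (Xall * K)) = Xall * K" by (simp add: assoc_ext[OF KX])
  have PiPi: "Pi * Pi = Pi" unfolding Pi_def by (simp add: dRm dLm mA XKXK)
  have PiX: "Pi * Xall = 0\<^sub>m n (2*m)" unfolding Pi_def by (simp add: dRm mA KX)
  have KPi: "K * Pi = 0\<^sub>m (2*m) n" unfolding Pi_def by (simp add: dLm assoc_ext[OF KX])
  from idem_factor[OF Pi PiPi] obtain n' Zc Phc where Zc: "Zc \<in> carrier_mat n n'"
    and Phc: "Phc \<in> carrier_mat n' n" and PhZc: "Phc * Zc = 1\<^sub>m n'" and ZPhc: "Zc * Phc = Pi" by blast
  note [simp] = cD[OF Zc] cD[OF Phc]
  have PiZc: "Pi * Zc = Zc" unfolding ZPhc[symmetric] by (simp add: mA PhZc)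
  have PhcPi: "Phc * Pi = Phc" unfolding ZPhc[symmetric] by (simp add: mA[symmetric] PhZc)
  have PhcX: "Phc * Xall = 0\<^sub>m n' (2*m)"
  proof -
    have "Phc * Xall = (Phc * Pi) * Xall" by (simp only: PhcPi)
    also have "\<dots> = 0\<^sub>m n' (2*m)" by (simp add: mA PiX)
    finally show ?thesis .
  qed
  have KZc: "K * Zc = 0\<^sub>m (2*m) n'"
  proof -
    have "K * Zc = K * (Pi * Zc)" by (simp only: PiZc)
    also have "\<dots> = 0\<^sub>m (2*m) n'" by (simp add: mA[symmetric] KPi)
    finally show ?thesis .
  qed
  have XtBPi: "transpose_mat Xall * B * Pi = 0\<^sub>m (2*m) n"
  proof -
    have "transpose_mat Xall * B * Pi = transpose_mat Xall * B - transpose_mat Xall * B * Xall * K"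
      unfolding Pi_def by (simp add: dLm mA)
    also have "\<dots> = 0\<^sub>m (2*m) n" unfolding XtBX J2K by simp
    finally show ?thesis .
  qed
  have XtBtPi: "transpose_mat Xall * transpose_mat B * Pi = 0\<^sub>m (2*m) n"
  proof -
    have e: "transpose_mat Xall * transpose_mat B * Xall = transpose_mat (J2perp m)"
      unfolding XtBX[symmetric] by (simp add: tM mA)
    have "transpose_mat Xall * transpose_mat B * Pi = transpose_mat Xall * transpose_mat B - transpose_mat Xall * transpose_mat B * Xall * K"
      unfolding Pi_def by (simp add: dLm mA)
    also have "\<dots> = 0\<^sub>m (2*m) n" unfolding e J2tK by simp
    finally show ?thesis .
  qed
  have XtBZc: "transpose_mat Xall * B * Zc = 0\<^sub>m (2*m) n'"
  proof -
    have "transpose_mat Xall * B * Zc = transpose_mat Xall * B * (Pi * Zc)" by (simp only: PiZc)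
    also have "\<dots> = 0\<^sub>m (2*m) n'" by (simp add: mA[symmetric] XtBPi)
    finally show ?thesis .
  qed
  have XtBtZc: "transpose_mat Xall * transpose_mat B * Zc = 0\<^sub>m (2*m) n'"
  proof -
    have "transpose_mat Xall * transpose_mat B * Zc = transpose_mat Xall * transpose_mat B * (Pi * Zc)" by (simp only: PiZc)
    also have "\<dots> = 0\<^sub>m (2*m) n'" by (simp add: mA[symmetric] XtBtPi)
    finally show ?thesis .
  qed
  have ZctBX: "transpose_mat Zc * B * Xall = 0\<^sub>m n' (2*m)"
  proof -
    have "transpose_mat Zc * B * Xall = transpose_mat (transpose_mat Xall * transpose_mat B * Zc)"
      by (simp add: tM mA)
    thus ?thesis unfolding XtBtZc by simp
  qed
  have ZctBtX: "transpose_mat Zc * transpose_mat B * Xall = 0\<^sub>m n' (2*m)"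
  proof -
    have "transpose_mat Zc * transpose_mat B * Xall = transpose_mat (transpose_mat Xall * B * Zc)"
      by (simp add: tM mA)
    thus ?thesis unfolding XtBZc by simp
  qed
  let ?E1 = "E1 n' (2*m)" and ?E2 = "E2 n' (2*m)"
  define F where "F = ?E1 * Phc + ?E2 * K"
  define G where "G = Zc * transpose_mat ?E1 + Xall * transpose_mat ?E2"
  have F: "F \<in> carrier_mat (n' + 2*m) n" and G: "G \<in> carrier_mat n (n' + 2*m)"
    unfolding F_def G_def carrier_mat_def by auto
  note [simp] = cD[OF F] cD[OF G]
  have FG: "F * G = 1\<^sub>m (n' + 2*m)"
    unfolding F_def G_def
    by (simp add: dL dR mA assoc_ext[OF PhZc] assoc_ext[OF PhcX] assoc_ext[OF KZc] assoc_ext[OF KX] EEt)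
  have GF: "G * F = 1\<^sub>m n"
  proof -
    have "G * F = Zc * Phc + Xall * K"
      unfolding F_def G_def
      by (simp add: dL dR mA assoc_ext[OF E1tE1] assoc_ext[OF E1tE2] assoc_ext[OF E2tE1] assoc_ext[OF E2tE2])
    also have "\<dots> = 1\<^sub>m n" unfolding ZPhc Pi_def by simp
    finally show ?thesis .
  qed
  define B' where "B' = transpose_mat Zc * B * Zc"
  have B': "B' \<in> carrier_mat n' n'" unfolding B'_def carrier_mat_def by simp
  note [simp] = cD[OF B']
  define C where "C = infl_form n' B' (2*m) (J2perp m)"
  have C: "C \<in> carrier_mat (n' + 2*m) (n' + 2*m)" unfolding C_def infl_form_def
    by (rule four_block_carrier_mat[OF B' J2_carrier(1)])
  have C_eq: "C = ?E1 * (B' * transpose_mat ?E1) + ?E2 * (J2perp m * transpose_mat ?E2)"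
    unfolding C_def infl_form_def by (rule four_block_E[OF B' J2_carrier(1)])
  have GtBG: "transpose_mat G * B * G = C"
    unfolding C_eq G_def B'_def
    by (simp add: dL dR mA tA tM assoc_ext3[OF ZctBX] assoc_ext3[OF XtBZc] assoc_ext3[OF XtBX])
  define TX where "TX = U * E * transpose_mat W"
  define TN where "TN = U * (1\<^sub>m k - E) * transpose_mat W"
  have Tc: "T \<in> carrier_mat n n" unfolding TUW carrier_mat_def by simp
  note [simp] = cD[OF Tc]
  have TX: "TX \<in> carrier_mat n n" and TN: "TN \<in> carrier_mat n n"
    unfolding TX_def TN_def carrier_mat_def by auto
  note [simp] = cD[OF TX] cD[OF TN]
  have Tsplit: "T = TX + TN"
    unfolding TUW TX_def TN_def by (simp add: dLm dRm mA)
  have E1E: "(1\<^sub>m k - E) * (1\<^sub>m k - E) = 1\<^sub>m k - E"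
    by (simp add: dLm dRm EE)
  have E1Et: "transpose_mat (1\<^sub>m k - E) = 1\<^sub>m k - E"
    by (simp add: tMi Et)
  have TX_fact: "TX = (U * E) * transpose_mat (W * E)"
  proof -
    have "(U * E) * transpose_mat (W * E) = U * (E * E) * transpose_mat W" by (simp add: tM mA Et)
    thus ?thesis unfolding EE TX_def by simp
  qed
  have TN_fact: "TN = (U * (1\<^sub>m k - E)) * transpose_mat (W * (1\<^sub>m k - E))"
  proof -
    have "(U * (1\<^sub>m k - E)) * transpose_mat (W * (1\<^sub>m k - E)) = U * ((1\<^sub>m k - E) * (1\<^sub>m k - E)) * transpose_mat W"
      by (simp add: tM mA E1Et)
    thus ?thesis unfolding E1E TN_def by simp
  qed
  have UE: "U * E = Xm * transpose_mat Z"
  proof -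
    have "Xm * transpose_mat Z = U * transpose_mat (Z * \<Phi>)" unfolding Xm_def by (simp add: tM mA)
    thus ?thesis unfolding ZPh Et by simp
  qed
  have WE: "W * E = Ym * (\<Phi> * R * Z * \<Phi>)"
  proof -
    have "Ym * (\<Phi> * R * Z * \<Phi>) = W * (Rinv * (Z * \<Phi>) * R * (Z * \<Phi>))" unfolding Ym_def by (simp add: mA)
    also have "\<dots> = W * (Rinv * (E * R) * E)" unfolding ZPh by (simp add: mA)
    also have "\<dots> = W * ((Rinv * R) * (E * E))" unfolding ERc by (simp add: mA)
    also have "\<dots> = W * E" unfolding RiR EE by simp
    finally show ?thesis by simp
  qed
  have PhcXm: "Phc * Xm = 0\<^sub>m n' m" unfolding XSx[symmetric] by (simp add: mA[symmetric] PhcX)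
  have PhcYm: "Phc * Ym = 0\<^sub>m n' m" unfolding XSy[symmetric] by (simp add: mA[symmetric] PhcX)
  have PhcUE: "Phc * (U * E) = 0\<^sub>m n' k" unfolding UE by (simp add: mA[symmetric] PhcXm)
  have PhcWE: "Phc * (W * E) = 0\<^sub>m n' k" unfolding WE by (simp add: mA[symmetric] PhcYm)
  have JRZ: "E * (J * (Rinv * Z)) = J * (Rinv * Z)"
  proof -
    have "J * (Rinv * Z) = J * (Rinv * (E * Z))" by (simp only: EZ)
    also have "\<dots> = J * (Rinv * E * Z)" by (simp add: mA)
    also have "\<dots> = (J * E) * (Rinv * Z)" unfolding RiE by (simp add: mA)
    also have "\<dots> = E * (J * (Rinv * Z))" unfolding EJ[symmetric] by (simp add: mA)
    finally show ?thesis by simp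
  qed
  have WtBtU: "transpose_mat W * transpose_mat B * U = transpose_mat J"
  proof -
    have "transpose_mat W * transpose_mat B * U = transpose_mat (transpose_mat U * B * W)" by (simp add: tM mA)
    thus ?thesis unfolding UBW .
  qed
  have Q1: "transpose_mat Ym * (transpose_mat B * (U * (1\<^sub>m k - E))) = 0\<^sub>m m k"
  proof -
    have e0: "(1\<^sub>m k - E) * (J * (Rinv * Z)) = 0\<^sub>m k m" by (simp add: dRm JRZ)
    have "transpose_mat Ym * (transpose_mat B * (U * (1\<^sub>m k - E))) =
        transpose_mat (Rinv * Z) * (transpose_mat W * transpose_mat B * U) * (1\<^sub>m k - E)"
      unfolding Ym_def by (simp add: tM mA)
    also have "\<dots> = transpose_mat ((1\<^sub>m k - E) * (J * (Rinv * Z)))"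
    proof -
      have a1: "transpose_mat ((1\<^sub>m k - E) * (J * (Rinv * Z))) = transpose_mat (J * (Rinv * Z)) * transpose_mat (1\<^sub>m k - E)"
        by (rule tM) simp
      have a2: "transpose_mat (J * (Rinv * Z)) = transpose_mat (Rinv * Z) * transpose_mat J"
        by (rule tM) simp
      show ?thesis unfolding WtBtU a1 a2 E1Et ..
    qed
    also have "\<dots> = 0\<^sub>m m k" unfolding e0 by simp
    finally show ?thesis .
  qed
  have Q2: "transpose_mat Xm * (B * (W * (1\<^sub>m k - E))) = 0\<^sub>m m k"
  proof -
    have "transpose_mat Xm * (B * (W * (1\<^sub>m k - E))) = \<Phi> * (transpose_mat U * B * W) * (1\<^sub>m k - E)"
      unfolding Xm_def by (simp add: tM mA)
    also have "\<dots> = (\<Phi> * E) * J * (1\<^sub>m k - E)" unfolding UBW PhE ..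
    also have "\<dots> = \<Phi> * J * (E * (1\<^sub>m k - E))" unfolding mA[of \<Phi> E J, simplified] EJ by (simp add: mA)
    also have "\<dots> = 0\<^sub>m m k"
    proof -
      have "E * (1\<^sub>m k - E) = 0\<^sub>m k k" by (simp add: dLm EE)
      thus ?thesis by simp
    qed
    finally show ?thesis .
  qed
  have KU1E: "K * (U * (1\<^sub>m k - E)) = 0\<^sub>m (2*m) k"
    unfolding K_def by (simp add: dR mA Q1 assoc_ext[OF BU])
  have KW1E: "K * (W * (1\<^sub>m k - E)) = 0\<^sub>m (2*m) k"
    unfolding K_def by (simp add: dR mA Q2 assoc_ext[OF BW])
  have PhcTX: "Phc * TX = 0\<^sub>m n' n" unfolding TX_fact by (simp add: mA[symmetric] PhcUE)
  have TXPhct: "TX * transpose_mat Phc = 0\<^sub>m n n'"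
  proof -
    have "TX * transpose_mat Phc = (U * E) * transpose_mat (Phc * (W * E))" unfolding TX_fact by (simp add: tM mA)
    thus ?thesis unfolding PhcWE by simp
  qed
  have KTN: "K * TN = 0\<^sub>m (2*m) n" unfolding TN_fact by (simp add: mA[symmetric] KU1E)
  have TNKt: "TN * transpose_mat K = 0\<^sub>m n (2*m)"
  proof -
    have "TN * transpose_mat K = (U * (1\<^sub>m k - E)) * transpose_mat (K * (W * (1\<^sub>m k - E)))"
      unfolding TN_fact by (simp add: tM mA)
    thus ?thesis unfolding KW1E by simp
  qed
  define Tp where "Tp = Phc * TN * transpose_mat Phc"
  define Tpp where "Tpp = K * TX * transpose_mat K"
  have Tp: "Tp \<in> carrier_mat n' n'" and Tpp: "Tpp \<in> carrier_mat (2*m) (2*m)"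
    unfolding Tp_def Tpp_def carrier_mat_def by auto
  note [simp] = cD[OF Tp] cD[OF Tpp]
  have b11: "Phc * T * transpose_mat Phc = Tp"
    unfolding Tsplit Tp_def by (simp add: dL PhcTX)
  have b12: "Phc * T * transpose_mat K = 0\<^sub>m n' (2*m)"
    unfolding Tsplit by (simp add: dL dR PhcTX mA TNKt)
  have b21: "K * T * transpose_mat Phc = 0\<^sub>m (2*m) n'"
    unfolding Tsplit by (simp add: dL dR KTN mA TXPhct)
  have b22: "K * T * transpose_mat K = Tpp"
    unfolding Tsplit Tpp_def by (simp add: dL dR KTN)
  define S where "S = infl_tensor n' Tp (2*m) Tpp"
  have S_eq: "S = ?E1 * (Tp * transpose_mat ?E1) + ?E2 * (Tpp * transpose_mat ?E2)"
    unfolding S_def infl_tensor_def by (rule four_block_E[OF Tp Tpp])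
  have FTF: "F * T * transpose_mat F = S"
    unfolding S_eq F_def
    by (simp add: dL dR mA tA tM assoc_ext3[OF b11] assoc_ext3[OF b12] assoc_ext3[OF b21] assoc_ext3[OF b22])
  define P1 where "P1 = Phc * (U * (1\<^sub>m k - E))"
  define P2 where "P2 = Phc * (W * (1\<^sub>m k - E))"
  have P1c: "P1 \<in> carrier_mat n' k" and P2c: "P2 \<in> carrier_mat n' k"
    unfolding P1_def P2_def carrier_mat_def by auto
  note [simp] = cD[OF P1c] cD[OF P2c]
  have Tp_fact: "Tp = P1 * transpose_mat P2"
    unfolding Tp_def TN_fact P1_def P2_def by (simp add: tM mA)
  have B'Phc: "B' * Phc = transpose_mat Zc * B"
  proof -
    have "B' * Phc = transpose_mat Zc * B * (Zc * Phc)" unfolding B'_def by (simp add: mA)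
    also have "\<dots> = transpose_mat Zc * B - transpose_mat Zc * B * Xall * K"
      unfolding ZPhc Pi_def by (simp add: dLm mA)
    also have "\<dots> = transpose_mat Zc * B" unfolding ZctBX by simp
    finally show ?thesis .
  qed
  have B'tPhc: "transpose_mat B' * Phc = transpose_mat Zc * transpose_mat B"
  proof -
    have "transpose_mat B' * Phc = transpose_mat Zc * transpose_mat B * (Zc * Phc)" unfolding B'_def by (simp add: tM mA)
    also have "\<dots> = transpose_mat Zc * transpose_mat B - transpose_mat Zc * transpose_mat B * Xall * K"
      unfolding ZPhc Pi_def by (simp add: dLm mA)
    also have "\<dots> = transpose_mat Zc * transpose_mat B" unfolding ZctBtX by simp
    finally show ?thesis .
  qed
  have B'P1: "B' * P1 = 0\<^sub>m n' k"
  proof -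
    have "B' * P1 = (B' * Phc) * (U * (1\<^sub>m k - E))" unfolding P1_def by (simp add: mA)
    also have "\<dots> = transpose_mat Zc * (B * U) * (1\<^sub>m k - E)" unfolding B'Phc by (simp add: mA)
    also have "\<dots> = 0\<^sub>m n' k" unfolding BU by simp
    finally show ?thesis .
  qed
  have B'tP2: "transpose_mat B' * P2 = 0\<^sub>m n' k"
  proof -
    have "transpose_mat B' * P2 = (transpose_mat B' * Phc) * (W * (1\<^sub>m k - E))" unfolding P2_def by (simp add: mA)
    also have "\<dots> = transpose_mat Zc * (transpose_mat B * W) * (1\<^sub>m k - E)" unfolding B'tPhc by (simp add: mA)
    also have "\<dots> = 0\<^sub>m n' k" unfolding BW by simp
    finally show ?thesis .
  qed
  have tin_p: "tensor_in n' Tp (Rrad n' B') (Lrad n' B')"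
    unfolding Tp_fact
    by (rule tensor_in_I[OF P1c P2c]) (auto intro: col_Rrad[OF B' P1c B'P1] col_Lrad[OF B' P2c B'tP2])
  define Q1m where "Q1m = K * (U * E)"
  define Q2m where "Q2m = K * (W * E)"
  have Q1c: "Q1m \<in> carrier_mat (2*m) k" and Q2c: "Q2m \<in> carrier_mat (2*m) k"
    unfolding Q1m_def Q2m_def carrier_mat_def by auto
  note [simp] = cD[OF Q1c] cD[OF Q2c]
  have Tpp_fact: "Tpp = Q1m * transpose_mat Q2m"
    unfolding Tpp_def TX_fact Q1m_def Q2m_def by (simp add: tM mA)
  have J2Q1: "J2perp m * Q1m = 0\<^sub>m (2*m) k"
  proof -
    have "J2perp m * Q1m = (J2perp m * K) * (U * E)" unfolding Q1m_def by (simp add: mA)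
    also have "\<dots> = transpose_mat Xall * (B * U) * E" unfolding J2K by (simp add: mA)
    also have "\<dots> = 0\<^sub>m (2*m) k" unfolding BU by simp
    finally show ?thesis .
  qed
  have J2tQ2: "transpose_mat (J2perp m) * Q2m = 0\<^sub>m (2*m) k"
  proof -
    have "transpose_mat (J2perp m) * Q2m = (transpose_mat (J2perp m) * K) * (W * E)" unfolding Q2m_def by (simp add: mA)
    also have "\<dots> = transpose_mat Xall * (transpose_mat B * W) * E" unfolding J2tK by (simp add: mA)
    also have "\<dots> = 0\<^sub>m (2*m) k" unfolding BW by simp
    finally show ?thesis .
  qed
  have tin_pp: "tensor_in (2*m) Tpp (Rrad (2*m) (J2perp m)) (Lrad (2*m) (J2perp m))"
    unfolding Tpp_fact
    by (rule tensor_in_I[OF Q1c Q2c])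
      (auto intro: col_Rrad[OF J2_carrier(1) Q1c J2Q1] col_Lrad[OF J2_carrier(1) Q2c J2tQ2])
  have trT: "mytr (transpose_mat B * T) = 1" using ev1 eval_tr[OF B Tc] by simp
  have trN: "mytr (transpose_mat B * TN) = 0"
  proof -
    have "mytr (transpose_mat B * TN) = mytr ((transpose_mat B * U * (1\<^sub>m k - E)) * transpose_mat W)"
      unfolding TN_def by (simp add: mA)
    also have "\<dots> = mytr (transpose_mat W * (transpose_mat B * U * (1\<^sub>m k - E)))"
    proof -
      have c1: "transpose_mat B * U * (1\<^sub>m k - E) \<in> carrier_mat n k" unfolding carrier_mat_def by simp
      have c2: "transpose_mat W \<in> carrier_mat k n" unfolding carrier_mat_def by simp
      show ?thesis by (rule tr_comm[OF c1 c2])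
    qed
    also have "\<dots> = mytr (transpose_mat J * (1\<^sub>m k - E))"
    proof -
      have "transpose_mat W * (transpose_mat B * U * (1\<^sub>m k - E)) = (transpose_mat W * transpose_mat B * U) * (1\<^sub>m k - E)"
        by (simp add: mA)
      thus ?thesis unfolding WtBtU by simp
    qed
    also have "\<dots> = 0" by (rule tr0)
    finally show ?thesis .
  qed
  have trX: "mytr (transpose_mat B * TX) = 1"
  proof -
    have "transpose_mat B * T = transpose_mat B * TX + transpose_mat B * TN" unfolding Tsplit by (simp add: dL)
    hence "mytr (transpose_mat B * T) = mytr (transpose_mat B * TX) + mytr (transpose_mat B * TN)"
      by (simp add: tr_add)
    thus ?thesis using trT trN by simp
  qed
  have KtJ2t: "transpose_mat K * transpose_mat (J2perp m) = transpose_mat B * Xall"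
  proof -
    have "transpose_mat (J2perp m * K) = transpose_mat (transpose_mat Xall * B)" unfolding J2K ..
    thus ?thesis by (simp add: tM)
  qed
  have PiTX: "Pi * TX = 0\<^sub>m n n"
  proof -
    have "Pi * TX = Zc * (Phc * TX)" unfolding ZPhc[symmetric] by (simp add: mA)
    thus ?thesis unfolding PhcTX by simp
  qed
  have XKTX: "Xall * (K * TX) = TX"
  proof -
    have "TX - Xall * (K * TX) = Pi * TX" unfolding Pi_def by (simp add: dRm mA)
    hence "TX - Xall * (K * TX) = 0\<^sub>m n n" unfolding PiTX .
    from minus_zero_eq[OF this] show ?thesis by simp
  qed
  have evpp: "eval_tensor (2*m) (J2perp m) Tpp = 1"
  proof -
    have "eval_tensor (2*m) (J2perp m) Tpp = mytr (transpose_mat (J2perp m) * Tpp)"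
      by (rule eval_tr[OF J2_carrier(1) Tpp])
    also have "\<dots> = mytr ((transpose_mat (J2perp m) * K * TX) * transpose_mat K)"
      unfolding Tpp_def by (simp add: mA)
    also have "\<dots> = mytr (transpose_mat K * (transpose_mat (J2perp m) * K * TX))"
    proof -
      have c1: "transpose_mat (J2perp m) * K * TX \<in> carrier_mat (2*m) n" unfolding carrier_mat_def by simp
      have c2: "transpose_mat K \<in> carrier_mat n (2*m)" unfolding carrier_mat_def by simp
      show ?thesis by (rule tr_comm[OF c1 c2])
    qed
    also have "\<dots> = mytr (transpose_mat B * (Xall * (K * TX)))"
      by (simp add: mA assoc_ext[OF KtJ2t])
    also have "\<dots> = 1" unfolding XKTX by (rule trX)
    finally show ?thesis .
  qed
  have evp: "eval_tensor n' B' Tp = 0"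
  proof -
    have "eval_tensor n' B' Tp = mytr (transpose_mat B' * Tp)"
      by (rule eval_tr[OF B' Tp])
    also have "\<dots> = mytr ((transpose_mat B' * Phc * TN) * transpose_mat Phc)"
      unfolding Tp_def by (simp add: mA)
    also have "\<dots> = mytr (transpose_mat Phc * (transpose_mat B' * Phc * TN))"
    proof -
      have c1: "transpose_mat B' * Phc * TN \<in> carrier_mat n' n" unfolding carrier_mat_def by simp
      have c2: "transpose_mat Phc \<in> carrier_mat n n'" unfolding carrier_mat_def by simp
      show ?thesis by (rule tr_comm[OF c1 c2])
    qed
    also have "\<dots> = mytr (transpose_mat Phc * (transpose_mat Zc * (transpose_mat B * TN)))"
      unfolding B'tPhc by (simp add: mA)
    also have "\<dots> = mytr (transpose_mat Pi * (transpose_mat B * TN))"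
    proof -
      have "transpose_mat Phc * (transpose_mat Zc * (transpose_mat B * TN)) = transpose_mat Pi * (transpose_mat B * TN)"
        unfolding ZPhc[symmetric] by (simp add: tM mA)
      thus ?thesis by simp
    qed
    also have "\<dots> = mytr ((transpose_mat B * TN) * transpose_mat Pi)"
    proof -
      have c1: "transpose_mat Pi \<in> carrier_mat n n" unfolding carrier_mat_def by simp
      have c2: "transpose_mat B * TN \<in> carrier_mat n n" unfolding carrier_mat_def by simp
      show ?thesis by (rule tr_comm[OF c1 c2])
    qed
    also have "\<dots> = mytr (transpose_mat B * TN)"
    proof -
      have "(transpose_mat B * TN) * transpose_mat Pi = transpose_mat B * TN - transpose_mat B * (TN * transpose_mat K) * transpose_mat Xall"
        unfolding Pi_def by (simp add: tMi tM dLm mA)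
      also have "\<dots> = transpose_mat B * TN" unfolding TNKt by simp
      finally show ?thesis by simp
    qed
    also have "\<dots> = 0" by (rule trN)
    finally show ?thesis .
  qed
  have mpos: "m > 0"
  proof (rule ccontr)
    assume "\<not> m > 0"
    hence "m = 0" by simp
    hence "eval_tensor (2*m) (J2perp m) Tpp = 0" by (simp add: eval_tensor_def)
    thus False using evpp by simp
  qed
  have FtCF: "transpose_mat F * C * F = B"
  proof -
    have "transpose_mat F * C * F = transpose_mat (G * F) * B * (G * F)"
      unfolding GtBG[symmetric] by (simp add: tM mA)
    thus ?thesis unfolding GF by simp
  qed
  have GSG: "G * S * transpose_mat G = T"
  proof -
    have "G * S * transpose_mat G = (G * F) * T * transpose_mat (G * F)"
      unfolding FTF[symmetric] by (simp add: tM mA)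
    thus ?thesis unfolding GF by simp
  qed
  have morF: "E0_mor n B T (n' + 2*m) C S F"
    unfolding E0_mor_def using F FTF bil_mult[OF F C] FtCF by auto
  have morG: "E0_mor (n' + 2*m) C S n B T G"
    unfolding E0_mor_def using G GSG bil_mult[OF G B] GtBG by auto
  have iso: "E0_iso n B T (n' + 2*m) C S"
    unfolding E0_iso_def using morF morG GF FG by blast
  show ?thesis
    by (rule exI[of _ m], rule exI[of _ n'], rule exI[of _ B'], rule exI[of _ Tp], rule exI[of _ Tpp])
      (use mpos tin_pp evpp B' tin_p evp iso in \<open>auto simp: E0_obj_def infl_triple_def C_def S_def\<close>)
qed


theorem mainTheorem19:
  fixes n :: nat and B T :: "complex mat"
  assumes "E0_obj n B T"
  shows "\<exists>m n' B' T' T''. m > 0 \<and> E0_obj (2*m) (J2perp m) T'' \<and> infl_triple n' B' T'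
     \<and> E0_iso n B T (n' + 2*m) (infl_form n' B' (2*m) (J2perp m)) (infl_tensor n' T' (2*m) T'')"
  by (rule main_constr[OF assms])

end
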